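(* Let $\chi_1,\chi_2$ be primitive Dirichlet characters with conductors $q_1,q_2>1$ respectively, such that $\chi_1\chi_2(-1)=1$, and let $N=q_1q_2$. There is an algorithm which, given $\gamma=\begin{pmatrix} a&b\\ c&d\end{pmatrix}\in\Gamma_0(N)$ with $c\geq 1$, computes $S_{\chi_1,\chi_2}(\gamma)$, and whose running time as a function of $\gamma$, for fixed $q_1,q_2$ (equivalently, fixed $\chi_1,\chi_2$), is $O(\log(c))$ in the model of computation described in the context.
   Context: $\Gamma_0(N)$ denotes the subgroup of $\mathrm{SL}_2(\mathbb{Z})$ of matrices $\begin{pmatrix} a&b\\ c&d\end{pmatrix}$ with $c\equiv 0 \pmod N$. Let $B_1(x)=0$ if $x\in\mathbb{Z}$ and $B_1(x)=x-\lfloor x\rfloor-\tfrac12$ otherwise. For $\gamma=\begin{pmatrix} a&b\\ c&d\end{pmatrix}\in\Gamma_0(q_1q_2)$ with $c\ge 1$, the generalized Dedekind sum is $$S_{\chi_1,\chi_2}(\gamma)=\sum_{j=1}^{c}\sum_{i=1}^{q_1}\overline{\chi_2(j)\chi_1(i)}\,B_1\!\left(\frac{j}{c}\right)B_1\!\left(\frac{i}{q_1}+\frac{aj}{c}\right).$$ Model of computation: a multiplication of two $2\times 2$ integer matrices counts as one operation; inverting a matrix in $\mathrm{SL}_2(\mathbb{Z})$ takes constant time; values of Dedekind sums lie in a cyclotomic field and are represented as linear combinations of powers of a fixed root of unity, and addition and multiplication of such values take constant time. Any precomputation that depends only on $\chi_1,\chi_2$ (and not on $\gamma$) is not counted as a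 function of $\gamma$. *)

theory Defs
  imports Complex_Main
begin

definition dirichlet_char :: "int \<Rightarrow> (int \<Rightarrow> complex) \<Rightarrow> bool" where
  "dirichlet_char q \<chi> \<longleftrightarrow> q \<ge> 1 \<and>
     (\<forall>n. \<chi> (n + q) = \<chi> n) \<and>
     (\<forall>m n. \<chi> (m * n) = \<chi> m * \<chi> n) \<and>
     \<chi> 1 = 1 \<and>
     (\<forall>n. \<chi> n = 0 \<longleftrightarrow> \<not> coprime n q)"

text \<open>Primitive modulo q (i.e. of conductor q): not induced by a character modulo
  any proper divisor d of q, i.e. for every divisor d of q with d < q there is
  n coprime to q with n = 1 mod d and chi n different from 1.\<close>
definition primitive_char :: "int \<Rightarrow> (int \<Rightarrow> complex) \<Rightarrow> bool" where
  "primitive_char q \<chi> \<longleftrightarrow> dirichlet_char q \<chi> \<and>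
     (\<forall>d. 0 < d \<and> d dvd q \<and> d < q \<longrightarrow>
        (\<exists>n. coprime n q \<and> n mod d = 1 mod d \<and> \<chi> n \<noteq> 1))"

definition B1 :: "real \<Rightarrow> real" where
  "B1 x = (if x \<in> \<int> then 0 else x - of_int \<lfloor>x\<rfloor> - 1/2)"

definition in_Gamma0 :: "int \<Rightarrow> int \<Rightarrow> int \<Rightarrow> int \<Rightarrow> int \<Rightarrow> bool" where
  "in_Gamma0 N a b c d \<longleftrightarrow> a * d - b * c = 1 \<and> N dvd c"

definition dedekind_sum ::
  "(int \<Rightarrow> complex) \<Rightarrow> (int \<Rightarrow> complex) \<Rightarrow> int \<Rightarrow> int \<Rightarrow> int \<Rightarrow> complex" where
  "dedekind_sum \<chi>1 \<chi>2 q1 a c =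
     (\<Sum>j=1..c. \<Sum>i=1..q1. cnj (\<chi>2 j * \<chi>1 i) *
        complex_of_real (B1 (real_of_int j / real_of_int c)) *
        complex_of_real (B1 (real_of_int i / real_of_int q1 + real_of_int a * real_of_int j / real_of_int c)))"

text \<open>A simple imperative language with unit-cost integer arithmetic (on integers of
  polynomially bounded size) and unit-cost ring arithmetic on cyclotomic values,
  represented as complex numbers.  Matrix operations on 2x2 integer matrices are expressible by a
  constant number of integer operations.\<close>

datatype iexp = IConst int | IVar nat | IAdd iexp iexp | ISub iexp iexp | IMul iexp iexp
  | IDiv iexp iexp | IMod iexp iexp

datatype cexp = CConst complex | CVar nat | COfInt iexp | CAdd cexp cexp | CSub cexp cexp
  | CMul cexp cexp

datatype bexp = BLe iexp iexp | BEq iexp iexp | BNot bexp | BAnd bexp bexp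

datatype com = Skip | IAssign nat iexp | CAssign nat cexp | Seq com com
  | If bexp com com | While bexp com

type_synonym state = "(nat \<Rightarrow> int) \<times> (nat \<Rightarrow> complex)"

fun ival :: "(nat \<Rightarrow> int) \<Rightarrow> iexp \<Rightarrow> int" where
  "ival s (IConst k) = k"
| "ival s (IVar x) = s x"
| "ival s (IAdd e1 e2) = ival s e1 + ival s e2"
| "ival s (ISub e1 e2) = ival s e1 - ival s e2"
| "ival s (IMul e1 e2) = ival s e1 * ival s e2"
| "ival s (IDiv e1 e2) = ival s e1 div ival s e2"
| "ival s (IMod e1 e2) = ival s e1 mod ival s e2"

fun ibnd :: "int \<Rightarrow> (nat \<Rightarrow> int) \<Rightarrow> iexp \<Rightarrow> bool" where
  "ibnd B s (IConst k) = (\<bar>k\<bar> \<le> B)"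
| "ibnd B s (IVar x) = True"
| "ibnd B s (IAdd e1 e2) = (ibnd B s e1 \<and> ibnd B s e2 \<and> \<bar>ival s (IAdd e1 e2)\<bar> \<le> B)"
| "ibnd B s (ISub e1 e2) = (ibnd B s e1 \<and> ibnd B s e2 \<and> \<bar>ival s (ISub e1 e2)\<bar> \<le> B)"
| "ibnd B s (IMul e1 e2) = (ibnd B s e1 \<and> ibnd B s e2 \<and> \<bar>ival s (IMul e1 e2)\<bar> \<le> B)"
| "ibnd B s (IDiv e1 e2) = (ibnd B s e1 \<and> ibnd B s e2 \<and> \<bar>ival s (IDiv e1 e2)\<bar> \<le> B)"
| "ibnd B s (IMod e1 e2) = (ibnd B s e1 \<and> ibnd B s e2 \<and> \<bar>ival s (IMod e1 e2)\<bar> \<le> B)"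

fun isize :: "iexp \<Rightarrow> nat" where
  "isize (IConst k) = 0"
| "isize (IVar x) = 0"
| "isize (IAdd e1 e2) = 1 + isize e1 + isize e2"
| "isize (ISub e1 e2) = 1 + isize e1 + isize e2"
| "isize (IMul e1 e2) = 1 + isize e1 + isize e2"
| "isize (IDiv e1 e2) = 1 + isize e1 + isize e2"
| "isize (IMod e1 e2) = 1 + isize e1 + isize e2"

fun cval :: "state \<Rightarrow> cexp \<Rightarrow> complex" where
  "cval s (CConst z) = z"
| "cval s (CVar x) = snd s x"
| "cval s (COfInt e) = of_int (ival (fst s) e)"
| "cval s (CAdd e1 e2) = cval s e1 + cval s e2"
| "cval s (CSub e1 e2) = cval s e1 - cval s e2"
| "cval s (CMul e1 e2) = cval s e1 * cval s e2"

fun cbnd :: "int \<Rightarrow> state \<Rightarrow> cexp \<Rightarrow> bool" where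
  "cbnd B s (CConst z) = True"
| "cbnd B s (CVar x) = True"
| "cbnd B s (COfInt e) = ibnd B (fst s) e"
| "cbnd B s (CAdd e1 e2) = (cbnd B s e1 \<and> cbnd B s e2)"
| "cbnd B s (CSub e1 e2) = (cbnd B s e1 \<and> cbnd B s e2)"
| "cbnd B s (CMul e1 e2) = (cbnd B s e1 \<and> cbnd B s e2)"

fun csize :: "cexp \<Rightarrow> nat" where
  "csize (CConst z) = 0"
| "csize (CVar x) = 0"
| "csize (COfInt e) = 1 + isize e"
| "csize (CAdd e1 e2) = 1 + csize e1 + csize e2"
| "csize (CSub e1 e2) = 1 + csize e1 + csize e2"
| "csize (CMul e1 e2) = 1 + csize e1 + csize e2"

fun bval :: "(nat \<Rightarrow> int) \<Rightarrow> bexp \<Rightarrow> bool" where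
  "bval s (BLe e1 e2) = (ival s e1 \<le> ival s e2)"
| "bval s (BEq e1 e2) = (ival s e1 = ival s e2)"
| "bval s (BNot b) = (\<not> bval s b)"
| "bval s (BAnd b1 b2) = (bval s b1 \<and> bval s b2)"

fun bbnd :: "int \<Rightarrow> (nat \<Rightarrow> int) \<Rightarrow> bexp \<Rightarrow> bool" where
  "bbnd B s (BLe e1 e2) = (ibnd B s e1 \<and> ibnd B s e2)"
| "bbnd B s (BEq e1 e2) = (ibnd B s e1 \<and> ibnd B s e2)"
| "bbnd B s (BNot b) = bbnd B s b"
| "bbnd B s (BAnd b1 b2) = (bbnd B s b1 \<and> bbnd B s b2)"

fun bsize :: "bexp \<Rightarrow> nat" where
  "bsize (BLe e1 e2) = 1 + isize e1 + isize e2"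
| "bsize (BEq e1 e2) = 1 + isize e1 + isize e2"
| "bsize (BNot b) = 1 + bsize b"
| "bsize (BAnd b1 b2) = 1 + bsize b1 + bsize b2"

inductive exec :: "int \<Rightarrow> com \<Rightarrow> state \<Rightarrow> nat \<Rightarrow> state \<Rightarrow> bool" for B :: int where
  ExSkip: "exec B Skip s 0 s"
| ExIAssign: "ibnd B (fst s) e \<Longrightarrow>
    exec B (IAssign x e) s (1 + isize e) ((fst s)(x := ival (fst s) e), snd s)"
| ExCAssign: "cbnd B s e \<Longrightarrow>
    exec B (CAssign x e) s (1 + csize e) (fst s, (snd s)(x := cval s e))"
| ExSeq: "exec B c1 s t1 s1 \<Longrightarrow> exec B c2 s1 t2 s2 \<Longrightarrow> exec B (Seq c1 c2) s (t1 + t2) s2"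
| ExIfT: "bbnd B (fst s) b \<Longrightarrow> bval (fst s) b \<Longrightarrow> exec B c1 s t s' \<Longrightarrow>
    exec B (If b c1 c2) s (1 + bsize b + t) s'"
| ExIfF: "bbnd B (fst s) b \<Longrightarrow> \<not> bval (fst s) b \<Longrightarrow> exec B c2 s t s' \<Longrightarrow>
    exec B (If b c1 c2) s (1 + bsize b + t) s'"
| ExWhileF: "bbnd B (fst s) b \<Longrightarrow> \<not> bval (fst s) b \<Longrightarrow>
    exec B (While b c) s (1 + bsize b) s"
| ExWhileT: "bbnd B (fst s) b \<Longrightarrow> bval (fst s) b \<Longrightarrow> exec B c s t1 s1 \<Longrightarrow>
    exec B (While b c) s1 t2 s2 \<Longrightarrow> exec B (While b c) s (1 + bsize b + t1 + t2) s2"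

text \<open>Complex constants occurring in a program (these encode all precomputation).\<close>
fun cconsts_e :: "cexp \<Rightarrow> complex set" where
  "cconsts_e (CConst z) = {z}"
| "cconsts_e (CVar x) = {}"
| "cconsts_e (COfInt e) = {}"
| "cconsts_e (CAdd e1 e2) = cconsts_e e1 \<union> cconsts_e e2"
| "cconsts_e (CSub e1 e2) = cconsts_e e1 \<union> cconsts_e e2"
| "cconsts_e (CMul e1 e2) = cconsts_e e1 \<union> cconsts_e e2"

fun cconsts :: "com \<Rightarrow> complex set" where
  "cconsts Skip = {}"
| "cconsts (IAssign x e) = {}"
| "cconsts (CAssign x e) = cconsts_e e"
| "cconsts (Seq c1 c2) = cconsts c1 \<union> cconsts c2"
| "cconsts (If b c1 c2) = cconsts c1 \<union> cconsts c2"
| "cconsts (While b c) = cconsts c"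

definition in_cyclotomic :: "nat \<Rightarrow> complex \<Rightarrow> bool" where
  "in_cyclotomic M z \<longleftrightarrow> (\<exists>r :: nat \<Rightarrow> rat.
     z = (\<Sum>k<M. of_rat (r k) * cis (2 * pi * real k / real M)))"

text \<open>Initial state on input matrix (a b; c d): integer registers 0..3 hold a,b,c,d,
  all other registers are 0.  The output is value register 0.\<close>
definition init_state :: "int \<Rightarrow> int \<Rightarrow> int \<Rightarrow> int \<Rightarrow> state" where
  "init_state a b c d =
     ((\<lambda>_. 0)(0 := a, 1 := b, 2 := c, 3 := d), (\<lambda>_. 0))"

end

theory Submission
  imports Defs "HOL-Number_Theory.Number_Theory"
begin


definition fsum :: "int \<Rightarrow> int \<Rightarrow> int \<Rightarrow> int \<Rightarrow> int" where
  "fsum n m a b = (\<Sum>i\<in>{0..<n}. (a*i+b) div m)"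

lemma int_range_insert: "0 \<le> n \<Longrightarrow> {0..<n+1::int} = insert n {0..<n}"
  by auto

lemma sum_int_range: "0 \<le> n \<Longrightarrow> 2 * (\<Sum>i\<in>{0..<n::int}. i) = n*(n-1)"
proof (induction n rule: int_ge_induct)
  case base then show ?case by simp
next
  case (step i)
  have "{0..<i+1} = insert i {0..<i}" using step by auto
  then show ?case using step by (simp add: algebra_simps)
qed

lemma fsum_norm:
  assumes "m > 0" "n \<ge> 0"
  shows "fsum n m a b = (a div m) * (n*(n-1) div 2) + (b div m)*n + fsum n m (a mod m) (b mod m)"
proof -
  have eq: "(a*i+b) div m = (a div m)*i + (b div m) + ((a mod m)*i + b mod m) div m" for i
  proof -
    have "a*i+b = ((a div m)*i + (b div m))*m + ((a mod m)*i + b mod m)"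
      by (simp add: algebra_simps) (metis div_mult_mod_eq add.commute mult.commute distrib_right mult.assoc)
    then have "(a*i+b) div m = (((a mod m)*i + b mod m) + ((a div m)*i + (b div m))*m) div m"
      by (simp add: add.commute)
    also have "\<dots> = ((a mod m)*i + b mod m) div m + ((a div m)*i + (b div m))"
      using assms(1) by simp
    finally show ?thesis by simp
  qed
  have "fsum n m a b = (\<Sum>i\<in>{0..<n}. (a div m)*i + (b div m) + ((a mod m)*i + b mod m) div m)"
    unfolding fsum_def using eq by simp
  also have "\<dots> = (a div m) * (\<Sum>i\<in>{0..<n}. i) + (b div m)*n + fsum n m (a mod m) (b mod m)"
    using assms by (simp add: sum.distrib sum_distrib_left fsum_def)
  also have "(\<Sum>i\<in>{0..<n}. i) = n*(n-1) div 2"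
    using sum_int_range[OF assms(2)] by simp
  finally show ?thesis .
qed

definition fH :: "int \<Rightarrow> int \<Rightarrow> int \<Rightarrow> int" where
  "fH m a y = (\<Sum>j\<in>{0..<y div m}. (j*m + y mod m) div a)"

lemma sum_shift1: "q \<ge> 0 \<Longrightarrow> (\<Sum>j\<in>{0..<q+1::int}. f j) = f 0 + (\<Sum>j\<in>{0..<q}. f (j+1))"
proof (induction q rule: int_ge_induct)
  case base
  have "{0..<1::int} = {0}" by auto
  then show ?case by simp
next
  case (step q)
  have e1: "{0..<q+1+1} = insert (q+1) {0..<q+1}" using step by auto
  have e2: "{0..<q+1} = insert q {0..<q}" using step by auto
  have "(\<Sum>j\<in>{0..<q+1+1}. f j) = f (q+1) + (\<Sum>j\<in>{0..<q+1}. f j)"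
    unfolding e1 by simp
  also have "\<dots> = f 0 + (f (q+1) + (\<Sum>j\<in>{0..<q}. f (j+1)))" using step by (simp add: add.left_commute)
  also have "f (q+1) + (\<Sum>j\<in>{0..<q}. f (j+1)) = (\<Sum>j\<in>{0..<q+1}. f (j+1))"
    unfolding e2 by simp
  finally show ?case .
qed

lemma fH_step:
  assumes "0 < a" "a < m" "0 \<le> y"
  shows "fH m a (y + a) = fH m a y + y div m"
proof -
  define q s where "q = y div m" and "s = y mod m"
  have s: "0 \<le> s" "s < m" using assms by (auto simp: s_def)
  have q: "q \<ge> 0" using assms by (simp add: q_def pos_imp_zdiv_nonneg_iff)
  have y: "y = q*m + s" by (simp add: q_def s_def)
  show ?thesis
  proof (cases "s + a < m")
    case True
    have d: "(y+a) div m = q" "(y+a) mod m = s + a"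
      using True s assms by (simp_all add: y add.assoc)
    have "fH m a (y+a) = (\<Sum>j\<in>{0..<q}. 1 + (j*m + s) div a)"
      unfolding fH_def d
      by (intro sum.cong refl) (use assms in \<open>simp add: algebra_simps\<close>)
    also have "\<dots> = q + fH m a y" using q
      by (simp add: sum.distrib fH_def q_def[symmetric] s_def[symmetric])
    finally show ?thesis by (simp add: q_def)
  next
    case False
    have d: "(y+a) div m = q + 1" "(y+a) mod m = s + a - m"
    proof -
      have "y + a = (q+1)*m + (s + a - m)" by (simp add: y algebra_simps)
      moreover have "0 \<le> s + a - m" "s + a - m < m" using False s assms by auto
      ultimately show "(y+a) div m = q + 1" "(y+a) mod m = s + a - m"
        by (simp_all add: int_div_pos_eq int_mod_pos_eq mult.commute)
    qed
    have "fH m a (y+a) = (\<Sum>j\<in>{0..<q+1}. (j*m + (s + a - m)) div a)"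
      unfolding fH_def d ..
    also have "\<dots> = (s + a - m) div a + (\<Sum>j\<in>{0..<q}. ((j+1)*m + (s + a - m)) div a)"
      using q by (simp add: sum_shift1)
    also have "(s + a - m) div a = 0" using False s assms by (intro div_pos_pos_trivial) auto
    also have "(\<Sum>j\<in>{0..<q}. ((j+1)*m + (s + a - m)) div a) = (\<Sum>j\<in>{0..<q}. 1 + (j*m + s) div a)"
      by (intro sum.cong refl) (use assms in \<open>simp add: algebra_simps\<close>)
    also have "\<dots> = q + fH m a y" using q
      by (simp add: sum.distrib fH_def q_def[symmetric] s_def[symmetric])
    finally show ?thesis by (simp add: q_def)
  qed
qed

lemma fsum_swap_aux:
  assumes "0 < a" "a < m" "0 \<le> b" "b < m" "0 \<le> n"
  shows "fsum n m a b = fH m a (a*n+b)"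
  using assms(5)
proof (induction n rule: int_ge_induct)
  case base
  then show ?case using assms by (simp add: fsum_def fH_def)
next
  case (step n)
  have "fsum (n+1) m a b = fsum n m a b + (a*n+b) div m"
    using step by (simp add: fsum_def int_range_insert)
  also have "\<dots> = fH m a (a*n+b + a)"
    using step assms by (simp add: fH_step)
  finally show ?case by (simp add: algebra_simps)
qed

lemma fsum_swap:
  assumes "0 < a" "a < m" "0 \<le> b" "b < m" "0 \<le> n"
  shows "fsum n m a b = fsum ((a*n+b) div m) a m ((a*n+b) mod m)"
  using fsum_swap_aux[OF assms] by (simp add: fH_def fsum_def algebra_simps)

lemma fsum_zero: "0 \<le> b \<Longrightarrow> b < m \<Longrightarrow> fsum n m 0 b = 0"
  by (simp add: fsum_def)


lemma char_shift_nat: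
  assumes "dirichlet_char q \<chi>"
  shows "\<chi> (x + int k * q) = \<chi> x"
proof (induction k)
  case 0 then show ?case by simp
next
  case (Suc k)
  have p: "\<chi> (n + q) = \<chi> n" for n using assms by (simp add: dirichlet_char_def)
  have "\<chi> (x + int (Suc k) * q) = \<chi> ((x + int k * q) + q)" by (simp add: algebra_simps)
  also have "\<dots> = \<chi> (x + int k * q)" by (rule p)
  finally show ?case using Suc by simp
qed

lemma char_mod:
  assumes "dirichlet_char q \<chi>"
  shows "\<chi> (x mod q) = \<chi> x"
proof (cases "x div q \<ge> 0")
  case True
  have eq: "x = x mod q + int (nat (x div q)) * q" using True by simp
  have "\<chi> (x mod q + int (nat (x div q)) * q) = \<chi> (x mod q)" by (rule char_shift_nat[OF assms])
  then show ?thesis using eq by metis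
next
  case False
  have "x mod q = x - (x div q) * q" by (rule minus_div_mult_eq_mod[symmetric])
  also have "\<dots> = x + int (nat (- (x div q))) * q" using False by simp
  finally have eq: "x mod q = x + int (nat (- (x div q))) * q" .
  show ?thesis by (subst eq) (rule char_shift_nat[OF assms])
qed

lemma char_cong:
  assumes "dirichlet_char q \<chi>" "x mod q = y mod q"
  shows "\<chi> x = \<chi> y"
  using char_mod[OF assms(1), of x] char_mod[OF assms(1), of y] assms(2) by simp

lemma char_cong2:
  assumes "dirichlet_char q \<chi>" "q dvd c" "x mod c = y mod c"
  shows "\<chi> x = \<chi> y"
proof (rule char_cong[OF assms(1)])
  have "x mod q = (x mod c) mod q" using assms(2) by (simp add: mod_mod_cancel)
  also have "\<dots> = (y mod c) mod q" using assms(3) by simp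
  also have "\<dots> = y mod q" using assms(2) by (simp add: mod_mod_cancel)
  finally show "x mod q = y mod q" .
qed

lemma char_mult:
  assumes "dirichlet_char q \<chi>"
  shows "\<chi> (x * y) = \<chi> x * \<chi> y"
  using assms by (simp add: dirichlet_char_def)

lemma char_zero_iff:
  assumes "dirichlet_char q \<chi>"
  shows "\<chi> x = 0 \<longleftrightarrow> \<not> coprime x q"
  using assms by (simp add: dirichlet_char_def)

lemma char_dvd_zero:
  assumes "dirichlet_char q \<chi>" "q > 1" "q dvd x"
  shows "\<chi> x = 0"
proof -
  have "\<not> coprime x q"
  proof
    assume "coprime x q"
    then have "is_unit q" using assms(3) by (meson coprime_common_divisor dvd_refl)
    then show False using assms(2) using zdvd1_eq[of q] by simp
  qed
  then show ?thesis using char_zero_iff[OF assms(1)] by simp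
qed

lemma char_sum_zero:
  assumes "primitive_char q \<chi>" "q > 1"
  shows "(\<Sum>i\<in>{1..q}. \<chi> i) = 0"
proof -
  have dc: "dirichlet_char q \<chi>" using assms by (simp add: primitive_char_def)
  obtain n where n: "coprime n q" "\<chi> n \<noteq> 1"
  proof -
    have "\<forall>d. 0 < d \<and> d dvd q \<and> d < q \<longrightarrow> (\<exists>n. coprime n q \<and> n mod d = 1 mod d \<and> \<chi> n \<noteq> 1)"
      using assms(1) unfolding primitive_char_def by blast
    from this[THEN spec[of _ 1]] have "\<exists>n. coprime n q \<and> n mod 1 = 1 mod 1 \<and> \<chi> n \<noteq> 1" using assms(2) by simp
    then show ?thesis using that by blast
  qed
  obtain n' where n': "[n * n' = 1] (mod q)"
    using cong_solve_coprime_int[OF n(1)] by blast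
  have inv1: "(n' * ((n * i) mod q)) mod q = i mod q" for i
  proof -
    have "(n' * ((n * i) mod q)) mod q = ((n*n') * i) mod q"
      by (simp add: mod_mult_right_eq algebra_simps)
    also have "\<dots> = (((n*n') mod q) * i) mod q" by (simp add: mod_mult_left_eq)
    also have "\<dots> = ((1 mod q) * i) mod q" using n' by (simp add: cong_def)
    also have "\<dots> = i mod q" by (simp add: mod_mult_left_eq)
    finally show ?thesis .
  qed
  have inv2: "(n * ((n' * i) mod q)) mod q = i mod q" for i
  proof -
    have "(n * ((n' * i) mod q)) mod q = ((n*n') * i) mod q"
      by (simp add: mod_mult_right_eq algebra_simps)
    also have "\<dots> = (((n*n') mod q) * i) mod q" by (simp add: mod_mult_left_eq)
    also have "\<dots> = ((1 mod q) * i) mod q" using n' by (simp add: cong_def)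
    also have "\<dots> = i mod q" by (simp add: mod_mult_left_eq)
    finally show ?thesis .
  qed
  have "(\<Sum>i\<in>{0..<q}. \<chi> i) = (\<Sum>i\<in>{0..<q}. \<chi> ((n*i) mod q))"
  proof (rule sum.reindex_bij_witness[where j="\<lambda>i. (n' * i) mod q" and i="\<lambda>i. (n * i) mod q"])
    fix i assume "i \<in> {0..<q}"
    then show "(n' * ((n * i) mod q)) mod q = i" using inv1[of i] by simp
  next
    fix i assume "i \<in> {0..<q}"
    then show "(n * ((n' * i) mod q)) mod q = i" using inv2[of i] by simp
  next
    fix i show "(n * i) mod q \<in> {0..<q}" using assms(2) by simp
  next
    fix i show "(n' * i) mod q \<in> {0..<q}" using assms(2) by simp
  next
    fix i assume "i \<in> {0..<q}"
    then show "\<chi> ((n * ((n' * i) mod q)) mod q) = \<chi> i" using inv2[of i] by simp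
  qed
  also have "\<dots> = (\<Sum>i\<in>{0..<q}. \<chi> n * \<chi> i)"
    using char_mod[OF dc] char_mult[OF dc] by simp
  also have "\<dots> = \<chi> n * (\<Sum>i\<in>{0..<q}. \<chi> i)" by (simp add: sum_distrib_left)
  finally have "(1 - \<chi> n) * (\<Sum>i\<in>{0..<q}. \<chi> i) = 0" by (simp add: algebra_simps)
  then have z: "(\<Sum>i\<in>{0..<q}. \<chi> i) = 0" using n(2) by simp
  have e1: "{1..q} = insert q {1..<q}" and e2: "{0..<q} = insert 0 {1..<q}" using assms(2) by auto
  have "\<chi> q = \<chi> 0" using char_mod[OF dc, of q] by simp
  then show ?thesis using z unfolding e1 e2 by simp
qed

lemma B1_periodic: "B1 (x + of_int t) = B1 x"
  by (simp add: B1_def add_in_Ints_iff_right[of "of_int t"])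

lemma B1_int: "B1 (of_int t) = 0"
  by (simp add: B1_def)

lemma B1_frac:
  assumes "0 < j" "j < c"
  shows "B1 (real_of_int j / real_of_int c) = real_of_int j / real_of_int c - 1/2"
proof -
  have ni: "real_of_int j / real_of_int c \<notin> \<int>"
    using assms by (auto simp: of_int_div_of_int_in_Ints_iff zdvd_not_zless)
  have "\<lfloor>real_of_int j / real_of_int c\<rfloor> = 0"
    using assms by (simp add: floor_divide_of_int_eq div_pos_pos_trivial)
  then show ?thesis using ni by (simp add: B1_def)
qed

lemma B1_div:
  assumes "c > 0" "\<not> c dvd p"
  shows "B1 (real_of_int p / real_of_int c) = real_of_int p / real_of_int c - real_of_int (p div c) - 1/2"
  using assms by (simp add: B1_def of_int_div_of_int_in_Ints_iff floor_divide_of_int_eq)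

lemma B1_step:
  assumes "0 \<le> k" "k < q1" "0 < s" "s < L" "1 \<le> i" "i \<le> q1" "c = q1 * L"
  shows "B1 (real_of_int i / real_of_int q1 + real_of_int (k*L+s) / real_of_int c)
     = real_of_int i / real_of_int q1 + real_of_int (k*L+s) / real_of_int c - 1/2 - (if i \<ge> q1 - k then 1 else 0)"
proof -
  have L: "L > 0" using assms by auto
  have q1: "q1 > 0" using assms by auto
  have x: "real_of_int i / real_of_int q1 + real_of_int (k*L+s) / real_of_int c
      = real_of_int ((i+k)*L + s) / real_of_int c"
    using L q1 assms(7) by (simp add: field_simps)
  have ni: "\<not> c dvd ((i+k)*L + s)"
  proof
    assume "c dvd ((i+k)*L + s)"
    then have "L dvd ((i+k)*L + s)" using assms(7) by (meson dvd_mult_right dvd_trans)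
    then have "L dvd s" by (simp add: dvd_add_right_iff)
    then show False using assms(3,4) zdvd_not_zless by blast
  qed
  have fl: "((i+k)*L + s) div c = (if i \<ge> q1 - k then 1 else 0)"
  proof (cases "i \<ge> q1 - k")
    case True
    have "q1 * L \<le> (i+k)*L" using True L by (intro mult_right_mono) auto
    moreover have "(i+k+1)*L \<le> 2*q1*L" using assms L by (intro mult_right_mono) auto
    ultimately have "(i+k)*L + s = c * 1 + ((i+k)*L + s - c)" "0 \<le> (i+k)*L + s - c" "(i+k)*L + s - c < c"
      using assms by (auto simp: algebra_simps)
    then show ?thesis using True int_div_pos_eq by metis
  next
    case False
    have "(i+k+1)*L \<le> q1*L" using False L by (intro mult_right_mono) auto
    then have "(i+k)*L + s < c" using assms by (simp add: algebra_simps)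
    moreover have "0 \<le> (i+k)*L + s" using assms L by simp
    ultimately show ?thesis using False by (simp add: div_pos_pos_trivial)
  qed
  have cpos: "c > 0" using assms(7) q1 L by simp
  have e: "B1 (real_of_int ((i+k)*L + s) / real_of_int c) = real_of_int ((i+k)*L + s) / real_of_int c - real_of_int (if i \<ge> q1 - k then 1 else 0) - 1/2"
    by (simp only: B1_div[OF cpos ni] fl)
  have aux: "\<And>y P. B1 y = y - real_of_int (if P then 1 else 0) - 1/2 \<Longrightarrow> B1 y = y - 1/2 - (if P then 1 else 0)"
    by auto
  show ?thesis unfolding x by (rule aux[OF e])
qed


lemma sum_split_int:
  fixes m n :: int
  assumes "n > 0" "m \<ge> 0"
  shows "(\<Sum>r\<in>{0..<m*n}. h r) = (\<Sum>u\<in>{0..<m}. \<Sum>v\<in>{0..<n}. h (u*n+v))"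
proof -
  have "(\<Sum>r\<in>{0..<m*n}. h r) = (\<Sum>p\<in>{0..<m}\<times>{0..<n}. h (fst p * n + snd p))"
  proof (rule sum.reindex_bij_witness[where j="\<lambda>r. (r div n, r mod n)" and i="\<lambda>p. fst p * n + snd p"])
    fix r assume "r \<in> {0..<m*n}"
    show "fst (r div n, r mod n) * n + snd (r div n, r mod n) = r" by simp
  next
    fix r assume r: "r \<in> {0..<m*n}"
    have le: "r div n * n \<le> r"
    proof -
      have "r = r div n * n + r mod n" by simp
      moreover have "r mod n \<ge> 0" using assms by simp
      ultimately show ?thesis by linarith
    qed
    have "r div n < m"
    proof (rule ccontr)
      assume "\<not> r div n < m"
      then have "m * n \<le> r div n * n" using assms by (intro mult_right_mono) auto
      then show False using le r by simp
    qed
    moreover have "0 \<le> r div n" using r assms by (simp add: pos_imp_zdiv_nonneg_iff)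
    ultimately show "(r div n, r mod n) \<in> {0..<m}\<times>{0..<n}" using assms by simp
  next
    fix p assume p: "p \<in> {0..<m}\<times>{0..<n}"
    then show "(((fst p * n + snd p)) div n, (fst p * n + snd p) mod n) = p"
      using assms by (cases p) (simp add: int_div_pos_eq int_mod_pos_eq mult.commute)
  next
    fix p assume p: "p \<in> {0..<m}\<times>{0..<n}"
    obtain u v where uv: "p = (u,v)" "0 \<le> u" "u < m" "0 \<le> v" "v < n" using p by auto
    have "(u+1)*n \<le> m*n" using uv assms by (intro mult_right_mono) auto
    then have "u*n + n \<le> m*n" by (simp add: algebra_simps)
    then show "fst p * n + snd p \<in> {0..<m*n}" using uv assms by simp
  next
    fix r assume "r \<in> {0..<m*n}"
    show "h (fst (r div n, r mod n) * n + snd (r div n, r mod n)) = h r" by simp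
  qed
  also have "\<dots> = (\<Sum>u\<in>{0..<m}. \<Sum>v\<in>{0..<n}. h (u*n+v))"
    by (simp add: sum.cartesian_product split_beta)
  finally show ?thesis .
qed

definition coefG :: "int \<Rightarrow> int \<Rightarrow> int \<Rightarrow> real" where
  "coefG q1 k i = real_of_int i / real_of_int q1 - 1/2 - (if i \<ge> q1 - k then 1 else 0)"

definition Gc :: "(int \<Rightarrow> complex) \<Rightarrow> int \<Rightarrow> int \<Rightarrow> complex" where
  "Gc \<chi>1 q1 k = (\<Sum>i\<in>{1..q1}. cnj (\<chi>1 i) * complex_of_real (coefG q1 k i))"

definition brk :: "int \<Rightarrow> int \<Rightarrow> int \<Rightarrow> int \<Rightarrow> int \<Rightarrow> int \<Rightarrow> real" where
  "brk q1 q2 c d' k \<rho> = real_of_int d' * (real_of_int (c div (q1*q2)) * real_of_int k / real_of_int q1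
      + real_of_int \<rho> / real_of_int (q1*q2) + (real_of_int (c div (q1*q2)) - 1) / (2 * real_of_int q1))
      - real_of_int (c div (q1*q2)) / 2
      - real_of_int (fsum (c div (q1*q2)) c (d'*q2) (d'*(q2*(c div (q1*q2))*k+\<rho>)))"

lemma brk_sum:
  assumes "q1 > 0" "q2 > 0" "e > 0" "c = q1*q2*e"
  shows "(\<Sum>t\<in>{0..<e}. real_of_int ((d' * (k*(q2*e) + (t*q2 + \<rho>))) mod c) / real_of_int c - 1/2)
     = brk q1 q2 c d' k \<rho>"
proof -
  have ce: "c div (q1*q2) = e" using assms by simp
  have cpos: "c > 0" using assms by simp
  define x where "x t = d' * (k*(q2*e) + (t*q2 + \<rho>))" for t
  have x_eq: "x t = (d'*q2)*t + d'*(q2*e*k+\<rho>)" for t by (simp add: x_def algebra_simps)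
  have md: "real_of_int (x t mod c) = real_of_int (x t) - real_of_int c * real_of_int (x t div c)" for t
  proof -
    have "x t mod c = x t - c * (x t div c)" by (simp add: mod_div_mult_eq minus_div_mult_eq_mod[symmetric] mult.commute)
    then show ?thesis by simp
  qed
  have "(\<Sum>t\<in>{0..<e}. real_of_int (x t mod c) / real_of_int c - 1/2)
      = (\<Sum>t\<in>{0..<e}. real_of_int (x t) / real_of_int c - real_of_int (x t div c) - 1/2)"
    using cpos by (intro sum.cong refl) (simp add: md field_simps)
  also have "\<dots> = (\<Sum>t\<in>{0..<e}. real_of_int (x t)) / real_of_int c - real_of_int (\<Sum>t\<in>{0..<e}. x t div c) - real_of_int e / 2"
    using assms(3) by (simp add: sum.distrib sum_subtractf sum_divide_distrib)
  also have "(\<Sum>t\<in>{0..<e}. x t div c) = fsum e c (d'*q2) (d'*(q2*e*k+\<rho>))"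
    by (simp add: fsum_def x_eq)
  also have "(\<Sum>t\<in>{0..<e}. real_of_int (x t)) = real_of_int (d'*q2) * (\<Sum>t\<in>{0..<e}. real_of_int t) + real_of_int e * real_of_int (d'*(q2*e*k+\<rho>))"
    using assms(3) by (simp add: x_eq sum.distrib sum_distrib_left)
  also have "(\<Sum>t\<in>{0..<e}. real_of_int t) = real_of_int e * (real_of_int e - 1) / 2"
  proof -
    have "2 * (\<Sum>t\<in>{0..<e}. t) = e*(e-1)" using sum_int_range assms(3) by simp
    then have "real_of_int (2 * (\<Sum>t\<in>{0..<e}. t)) = real_of_int (e*(e-1))" by simp
    then show ?thesis by simp
  qed
  finally have "(\<Sum>t\<in>{0..<e}. real_of_int (x t mod c) / real_of_int c - 1/2) =
     (real_of_int (d' * q2) * (real_of_int e * (real_of_int e - 1) / 2) + real_of_int e * real_of_int (d' * (q2 * e * k + \<rho>))) / real_of_int c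
     - real_of_int (fsum e c (d' * q2) (d' * (q2 * e * k + \<rho>))) - real_of_int e / 2" .
  also have "\<dots> = brk q1 q2 c d' k \<rho>"
    unfolding brk_def ce using assms by (simp add: field_simps)
  finally show ?thesis by (simp add: x_def)
qed

lemma ded_formula:
  assumes dc1: "dirichlet_char q1 \<chi>1" and dc2: "dirichlet_char q2 \<chi>2"
    and q1: "q1 > 1" and q2: "q2 > 1"
    and sz: "(\<Sum>i\<in>{1..q1}. cnj (\<chi>1 i)) = 0"
    and det: "a*d - b*c = 1" and dv: "q1*q2 dvd c" and c1: "c \<ge> 1"
  shows "dedekind_sum \<chi>1 \<chi>2 q1 a c = cnj (\<chi>2 (d mod c)) *
     (\<Sum>k\<in>{0..<q1}. \<Sum>\<rho>\<in>{0..<q2}. Gc \<chi>1 q1 k * cnj (\<chi>2 \<rho>) * complex_of_real (brk q1 q2 c (d mod c) k \<rho>))"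
proof -
  define d' where "d' = d mod c"
  define e where "e = c div (q1*q2)"
  define L where "L = q2*e"
  have cpos: "c > 0" using c1 by simp
  have ce: "c = q1*q2*e" using dv by (simp add: e_def)
  have epos: "e > 0"
  proof -
    have "q1*q2 > 0" using q1 q2 by simp
    moreover have "0 < (q1*q2)*e" using ce cpos by simp
    ultimately show ?thesis by (metis zero_less_mult_iff less_asym)
  qed
  have cL: "c = q1 * L" using ce by (simp add: L_def mult.assoc)
  have Lpos: "L > 0" using q2 epos by (simp add: L_def)
  have cgt1: "c > 1"
  proof -
    have "q1*q2 \<le> q1*q2*e" using epos q1 q2 by simp
    moreover have "1 < q1*q2" using q1 q2 by (metis less_1_mult)
    ultimately show ?thesis using ce by simp
  qed
  have ad: "(a*d') mod c = 1"
  proof -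
    have "(a*d') mod c = (a*d) mod c" by (simp add: d'_def mod_mult_right_eq)
    also have "a*d = 1 + b*c" using det by simp
    also have "(1 + b*c) mod c = 1" using cgt1 by simp
    finally show ?thesis .
  qed
  have inv: "(a * ((d'*r) mod c)) mod c = r mod c" for r
  proof -
    have "(a * ((d'*r) mod c)) mod c = ((a*d') * r) mod c" by (simp add: mod_mult_right_eq algebra_simps)
    also have "\<dots> = (((a*d') mod c) * r) mod c" by (simp add: mod_mult_left_eq)
    finally show ?thesis using ad by simp
  qed
  have inv': "(d' * ((a*j) mod c)) mod c = j mod c" for j
  proof -
    have "(d' * ((a*j) mod c)) mod c = ((a*d') * j) mod c" by (simp add: mod_mult_right_eq algebra_simps)
    also have "\<dots> = (((a*d') mod c) * j) mod c" by (simp add: mod_mult_left_eq)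
    finally show ?thesis using ad by simp
  qed
  define \<psi> where "\<psi> j = cnj (\<chi>2 j)" for j
  define \<phi> where "\<phi> i = cnj (\<chi>1 i)" for i
  define f where "f x = (\<Sum>i\<in>{1..q1}. \<phi> i * complex_of_real (B1 (real_of_int i / real_of_int q1 + x)))" for x
  define T where "T j = \<psi> j * complex_of_real (B1 (real_of_int j / real_of_int c)) * f (real_of_int a * real_of_int j / real_of_int c)" for j
  have f_per: "f (x + real_of_int z) = f x" for x z
    unfolding f_def by (intro sum.cong refl) (metis B1_periodic add.assoc)
  have S1: "dedekind_sum \<chi>1 \<chi>2 q1 a c = (\<Sum>j\<in>{1..c}. T j)"
    unfolding dedekind_sum_def T_def f_def \<psi>_def \<phi>_def
    by (intro sum.cong refl) (simp add: sum_distrib_left mult_ac)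
  have T0: "T 0 = 0" by (simp add: T_def B1_def)
  have Tc: "T c = 0"
  proof -
    have "B1 (real_of_int c / real_of_int c) = 0" using cpos B1_int[of 1] by simp
    then show ?thesis by (simp add: T_def)
  qed
  have S2: "(\<Sum>j\<in>{1..c}. T j) = (\<Sum>j\<in>{0..<c}. T j)"
  proof -
    have e1: "{1..c} = insert c {1..<c}" and e2: "{0..<c} = insert 0 {1..<c}" using cpos by auto
    show ?thesis unfolding e1 e2 using T0 Tc by simp
  qed
  have S3: "(\<Sum>j\<in>{0..<c}. T j) = (\<Sum>r\<in>{0..<c}. T ((d'*r) mod c))"
  proof (rule sum.reindex_bij_witness[where j="\<lambda>j. (a*j) mod c" and i="\<lambda>r. (d'*r) mod c"])
    fix j assume "j \<in> {0..<c}"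
    then show "(d' * ((a*j) mod c)) mod c = j" using inv'[of j] by simp
  next
    fix r assume "r \<in> {0..<c}"
    then show "(a * ((d'*r) mod c)) mod c = r" using inv[of r] by simp
  next
    fix j show "(a*j) mod c \<in> {0..<c}" using cpos by simp
  next
    fix r show "(d'*r) mod c \<in> {0..<c}" using cpos by simp
  next
    fix j assume "j \<in> {0..<c}"
    then show "T ((d' * ((a*j) mod c)) mod c) = T j" using inv'[of j] by simp
  qed
  have S4: "(\<Sum>r\<in>{0..<c}. T ((d'*r) mod c)) =
      (\<Sum>k\<in>{0..<q1}. \<Sum>\<rho>\<in>{0..<q2}. \<Sum>t\<in>{0..<e}. T ((d'*(k*L + (t*q2+\<rho>))) mod c))"
  proof -
    have "(\<Sum>r\<in>{0..<c}. T ((d'*r) mod c)) = (\<Sum>k\<in>{0..<q1}. \<Sum>s\<in>{0..<L}. T ((d'*(k*L+s)) mod c))"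
      unfolding cL using sum_split_int[OF Lpos, of q1] q1 by simp
    also have "\<dots> = (\<Sum>k\<in>{0..<q1}. \<Sum>t\<in>{0..<e}. \<Sum>\<rho>\<in>{0..<q2}. T ((d'*(k*L + (t*q2+\<rho>))) mod c))"
    proof (rule sum.cong[OF refl])
      fix k assume "k \<in> {0..<q1}"
      have dom: "{0..<L} = {0..<e*q2}" by (simp add: L_def mult.commute)
      show "(\<Sum>s\<in>{0..<L}. T ((d'*(k*L+s)) mod c)) = (\<Sum>t\<in>{0..<e}. \<Sum>\<rho>\<in>{0..<q2}. T ((d'*(k*L + (t*q2+\<rho>))) mod c))"
        unfolding dom using sum_split_int[of q2 e "\<lambda>s. T ((d'*(k*L+s)) mod c)"] q2 epos by simp
    qed
    also have "\<dots> = (\<Sum>k\<in>{0..<q1}. \<Sum>\<rho>\<in>{0..<q2}. \<Sum>t\<in>{0..<e}. T ((d'*(k*L + (t*q2+\<rho>))) mod c))"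
      by (intro sum.cong refl sum.swap)
    finally show ?thesis .
  qed
  have S5: "T ((d'*(k*L + (t*q2+\<rho>))) mod c) = \<psi> d' * (Gc \<chi>1 q1 k * \<psi> \<rho> *
        complex_of_real (real_of_int ((d'*(k*L + (t*q2+\<rho>))) mod c) / real_of_int c - 1/2))"
    if k: "k \<in> {0..<q1}" and \<rho>: "\<rho> \<in> {0..<q2}" and t: "t \<in> {0..<e}" for k \<rho> t
  proof -
    define s where "s = t*q2+\<rho>"
    define r where "r = k*L + s"
    define j where "j = (d'*r) mod c"
    have s0: "0 \<le> s" using t \<rho> by (simp add: s_def)
    have sL: "s < L"
    proof -
      have "(t+1)*q2 \<le> e*q2" using t q2 by (intro mult_right_mono) auto
      then show ?thesis using \<rho> by (simp add: s_def L_def algebra_simps)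
    qed
    have r0: "0 \<le> r" using k s0 Lpos by (simp add: r_def)
    have rc: "r < c"
    proof -
      have "(k+1)*L \<le> q1*L" using k Lpos by (intro mult_right_mono) auto
      then show ?thesis using sL cL by (simp add: r_def algebra_simps)
    qed
    have q2c: "q2 dvd c" using dv by (metis dvd_mult_right)
    have psij: "\<psi> j = \<psi> d' * \<psi> \<rho>"
    proof -
      have "\<chi>2 j = \<chi>2 (d'*r)" by (rule char_cong2[OF dc2 q2c]) (simp add: j_def)
      also have "\<dots> = \<chi>2 d' * \<chi>2 r" by (rule char_mult[OF dc2])
      also have "\<chi>2 r = \<chi>2 \<rho>"
      proof (rule char_cong[OF dc2])
        have "r = \<rho> + (k*e + t) * q2" by (simp add: r_def s_def L_def algebra_simps)
        then show "r mod q2 = \<rho> mod q2" by simp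
      qed
      finally show ?thesis by (simp add: \<psi>_def)
    qed
    show ?thesis
    proof (cases "\<psi> \<rho> = 0")
      case True
      then show ?thesis by (simp add: T_def psij j_def[symmetric] r_def[symmetric] s_def[symmetric])
    next
      case False
      have "\<chi>2 \<rho> \<noteq> 0" using False by (simp add: \<psi>_def)
      then have "\<rho> \<noteq> 0" using char_dvd_zero[OF dc2 q2, of 0] by auto
      then have spos: "s > 0" using t \<rho> q2 by (simp add: s_def) (smt (verit) mult_nonneg_nonneg)
      have j0: "0 \<le> j" "j < c" using cpos by (simp_all add: j_def)
      have ajr: "(a*j) mod c = r" using inv[of r] r0 rc by (simp add: j_def)
      have jpos: "j > 0"
      proof (rule ccontr)
        assume "\<not> j > 0"
        then have "j = 0" using j0 by simp
        then have "r = 0" using ajr by simp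
        then show False using spos Lpos k by (simp add: r_def) (smt (verit) mult_nonneg_nonneg)
      qed
      have B1j: "B1 (real_of_int j / real_of_int c) = real_of_int j / real_of_int c - 1/2"
        by (rule B1_frac[OF jpos j0(2)])
      have aj: "real_of_int a * real_of_int j / real_of_int c = real_of_int r / real_of_int c + real_of_int ((a*j) div c)"
      proof -
        have "a*j = r + c * ((a*j) div c)" using ajr by (metis mod_div_mult_eq mult.commute add.commute)
        then have "real_of_int (a*j) = real_of_int r + real_of_int c * real_of_int ((a*j) div c)"
          by (metis of_int_add of_int_mult)
        then show ?thesis using cpos by (simp add: field_simps)
      qed
      have fr: "f (real_of_int r / real_of_int c) = Gc \<chi>1 q1 k"
      proof -
        have "f (real_of_int r / real_of_int c) = (\<Sum>i\<in>{1..q1}. \<phi> i * (complex_of_real (coefG q1 k i) + complex_of_real (real_of_int r / real_of_int c)))"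
          unfolding f_def
        proof (intro sum.cong refl)
          fix i assume i: "i \<in> {1..q1}"
          have "B1 (real_of_int i / real_of_int q1 + real_of_int (k*L+s) / real_of_int c)
            = real_of_int i / real_of_int q1 + real_of_int (k*L+s) / real_of_int c - 1/2 - (if i \<ge> q1 - k then 1 else 0)"
            by (rule B1_step) (use k spos sL i cL in auto)
          then show "\<phi> i * complex_of_real (B1 (real_of_int i / real_of_int q1 + real_of_int r / real_of_int c)) =
            \<phi> i * (complex_of_real (coefG q1 k i) + complex_of_real (real_of_int r / real_of_int c))"
            by (simp add: r_def coefG_def)
        qed
        also have "\<dots> = Gc \<chi>1 q1 k + complex_of_real (real_of_int r / real_of_int c) * (\<Sum>i\<in>{1..q1}. \<phi> i)"
          by (simp add: Gc_def \<phi>_def distrib_left sum.distrib sum_distrib_left mult_ac)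
        also have "(\<Sum>i\<in>{1..q1}. \<phi> i) = 0" using sz by (simp add: \<phi>_def)
        finally show ?thesis by simp
      qed
      have "T j = \<psi> j * complex_of_real (real_of_int j / real_of_int c - 1/2) * Gc \<chi>1 q1 k"
        unfolding T_def B1j aj f_per fr ..
      then have "T j = \<psi> d' * (Gc \<chi>1 q1 k * \<psi> \<rho> * complex_of_real (real_of_int j / real_of_int c - 1/2))"
        by (simp only: psij mult_ac)
      then show ?thesis by (simp only: j_def r_def s_def)
    qed
  qed
  have S6: "(\<Sum>t\<in>{0..<e}. T ((d'*(k*L + (t*q2+\<rho>))) mod c)) = \<psi> d' * (Gc \<chi>1 q1 k * \<psi> \<rho> * complex_of_real (brk q1 q2 c d' k \<rho>))"
    if k: "k \<in> {0..<q1}" and \<rho>: "\<rho> \<in> {0..<q2}" for k \<rho>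
  proof -
    have "(\<Sum>t\<in>{0..<e}. T ((d'*(k*L + (t*q2+\<rho>))) mod c)) = \<psi> d' * (Gc \<chi>1 q1 k * \<psi> \<rho> *
        complex_of_real (\<Sum>t\<in>{0..<e}. real_of_int ((d'*(k*L + (t*q2+\<rho>))) mod c) / real_of_int c - 1/2))"
      using S5[OF k \<rho>] by (simp add: sum_distrib_left)
    also have "(\<Sum>t\<in>{0..<e}. real_of_int ((d'*(k*L + (t*q2+\<rho>))) mod c) / real_of_int c - 1/2) = brk q1 q2 c d' k \<rho>"
      unfolding L_def by (rule brk_sum) (use q1 q2 epos ce in auto)
    finally show ?thesis .
  qed
  have "dedekind_sum \<chi>1 \<chi>2 q1 a c = (\<Sum>k\<in>{0..<q1}. \<Sum>\<rho>\<in>{0..<q2}. \<psi> d' * (Gc \<chi>1 q1 k * \<psi> \<rho> * complex_of_real (brk q1 q2 c d' k \<rho>)))"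
    unfolding S1 S2 S3 S4 using S6 by simp
  also have "\<dots> = \<psi> d' * (\<Sum>k\<in>{0..<q1}. \<Sum>\<rho>\<in>{0..<q2}. Gc \<chi>1 q1 k * \<psi> \<rho> * complex_of_real (brk q1 q2 c d' k \<rho>))"
    by (simp add: sum_distrib_left)
  finally show ?thesis by (simp add: \<psi>_def d'_def)
qed


fun slrun :: "com \<Rightarrow> state \<Rightarrow> state" where
  "slrun Skip s = s"
| "slrun (IAssign x e) s = ((fst s)(x := ival (fst s) e), snd s)"
| "slrun (CAssign x e) s = (fst s, (snd s)(x := cval s e))"
| "slrun (Seq c1 c2) s = slrun c2 (slrun c1 s)"
| "slrun (If b c1 c2) s = (if bval (fst s) b then slrun c1 s else slrun c2 s)"
| "slrun (While b c) s = s"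

fun sltime :: "com \<Rightarrow> state \<Rightarrow> nat" where
  "sltime Skip s = 0"
| "sltime (IAssign x e) s = 1 + isize e"
| "sltime (CAssign x e) s = 1 + csize e"
| "sltime (Seq c1 c2) s = sltime c1 s + sltime c2 (slrun c1 s)"
| "sltime (If b c1 c2) s = 1 + bsize b + (if bval (fst s) b then sltime c1 s else sltime c2 s)"
| "sltime (While b c) s = 0"

fun slok :: "int \<Rightarrow> com \<Rightarrow> state \<Rightarrow> bool" where
  "slok B Skip s = True"
| "slok B (IAssign x e) s = ibnd B (fst s) e"
| "slok B (CAssign x e) s = cbnd B s e"
| "slok B (Seq c1 c2) s = (slok B c1 s \<and> slok B c2 (slrun c1 s))"
| "slok B (If b c1 c2) s = (bbnd B (fst s) b \<and> (if bval (fst s) b then slok B c1 s else slok B c2 s))"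
| "slok B (While b c) s = False"

lemma sl_exec: "slok B c s \<Longrightarrow> exec B c s (sltime c s) (slrun c s)"
proof (induction c arbitrary: s)
  case Skip then show ?case by (simp add: ExSkip)
next
  case (IAssign x e) then show ?case using ExIAssign[of B s e x] by simp
next
  case (CAssign x e) then show ?case using ExCAssign[of B s e x] by simp
next
  case (Seq c1 c2)
  from Seq.prems have p1: "slok B c1 s" and p2: "slok B c2 (slrun c1 s)" by simp_all
  have e1: "exec B c1 s (sltime c1 s) (slrun c1 s)" using Seq.IH(1)[OF p1] .
  have e2: "exec B c2 (slrun c1 s) (sltime c2 (slrun c1 s)) (slrun c2 (slrun c1 s))"
    using Seq.IH(2)[OF p2] .
  show ?case using ExSeq[OF e1 e2] by simp
next
  case (If b c1 c2)
  show ?case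
  proof (cases "bval (fst s) b")
    case True
    have "slok B c1 s" using If.prems True by simp
    then have "exec B c1 s (sltime c1 s) (slrun c1 s)" by (rule If.IH(1))
    then show ?thesis using ExIfT[of B s b c1 "sltime c1 s" "slrun c1 s" c2] True If.prems by simp
  next
    case False
    have "slok B c2 s" using If.prems False by simp
    then have "exec B c2 s (sltime c2 s) (slrun c2 s)" by (rule If.IH(2))
    then show ?thesis using ExIfF[of B s b c2 "sltime c2 s" "slrun c2 s" c1] False If.prems by simp
  qed
next
  case (While b c) then show ?case by simp
qed

definition accx :: "nat \<Rightarrow> nat \<Rightarrow> nat \<Rightarrow> nat \<Rightarrow> cexp" where
  "accx n m a b = CAdd (CMul (CMul (CMul (COfInt (IVar n)) (COfInt (ISub (IVar n) (IConst 1)))) (CConst (1/2)))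
       (COfInt (IDiv (IVar m) (IVar a)))) (CMul (COfInt (IVar n)) (COfInt (IDiv (IVar b) (IVar a))))"

definition fs_body :: com where
  "fs_body = Seq (IAssign 10 (IAdd (IMul (IVar 8) (IVar 6)) (IVar 9)))
     (Seq (IAssign 6 (IDiv (IVar 10) (IVar 7)))
     (Seq (IAssign 9 (IMod (IVar 10) (IVar 7)))
     (Seq (CAssign 1 (CAdd (CVar 1) (accx 6 7 8 9)))
     (Seq (IAssign 9 (IMod (IVar 9) (IVar 8)))
     (Seq (IAssign 11 (IMod (IVar 7) (IVar 8)))
     (Seq (IAssign 7 (IVar 8))
          (IAssign 8 (IVar 11))))))))"

definition fs_loop :: com where
  "fs_loop = While (BLe (IConst 1) (IVar 8)) fs_body"

definition pot :: "int \<Rightarrow> int \<Rightarrow> real" where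
  "pot M A = (if A = 0 then 0 else 1 + log 2 (real_of_int M) + log 2 (real_of_int A))"

lemma div_le_of_lt: "0 < (M::int) \<Longrightarrow> Y < M*(K+1) \<Longrightarrow> Y div M \<le> K"
proof (rule ccontr)
  assume a: "0 < M" "Y < M*(K+1)" "\<not> Y div M \<le> K"
  have "Y div M * M \<le> Y"
  proof -
    have "Y = Y div M * M + Y mod M" by simp
    moreover have "Y mod M \<ge> 0" using a by simp
    ultimately show ?thesis by linarith
  qed
  moreover have "(K+1) * M \<le> Y div M * M" using a by (intro mult_right_mono) auto
  moreover have "Y < (K+1) * M" using a by (simp add: mult.commute)
  ultimately show False by linarith
qed

lemma div_le_self_int: "0 \<le> (Y::int) \<Longrightarrow> 0 < M \<Longrightarrow> Y div M \<le> Y"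
proof -
  assume a: "0 \<le> Y" "0 < M"
  have "Y div M * M \<le> Y"
  proof -
    have "Y = Y div M * M + Y mod M" by simp
    moreover have "Y mod M \<ge> 0" using a by simp
    ultimately show ?thesis by linarith
  qed
  moreover have "Y div M * 1 \<le> Y div M * M" using a by (intro mult_left_mono) (auto simp: pos_imp_zdiv_nonneg_iff)
  ultimately show ?thesis by simp
qed

lemma half_prod: "complex_of_int (n*(n-1) div 2) = complex_of_int n * complex_of_int (n-1) / 2"
proof -
  have "even (n*(n-1))" by simp
  then have "n*(n-1) = 2 * (n*(n-1) div 2)" by simp
  then have "complex_of_int (n*(n-1)) = 2 * complex_of_int (n*(n-1) div 2)" by (metis of_int_mult of_int_numeral)
  then show ?thesis by simp
qed

lemma log_step:
  assumes "0 < A" "A < M" "0 < M mod A"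
  shows "1 + log 2 (real_of_int (M mod A)) \<le> log 2 (real_of_int M)"
proof -
  have "A + M mod A \<le> M"
  proof -
    have "M div A \<ge> 1" using zdiv_mono1[of A M A] assms by simp
    then have "A * 1 \<le> A * (M div A)" using assms by (intro mult_left_mono) auto
    moreover have "M = A * (M div A) + M mod A" by simp
    ultimately show ?thesis by linarith
  qed
  moreover have "M mod A < A" using assms by simp
  ultimately have "2 * real_of_int (M mod A) \<le> real_of_int M" by linarith
  then have "log 2 (2 * real_of_int (M mod A)) \<le> log 2 (real_of_int M)"
    using assms by (subst log_le_cancel_iff) auto
  then show ?thesis using assms by (simp add: log_mult)
qed

lemma fs_loop_lemma:
  assumes "fst s 6 = N" "fst s 7 = M" "fst s 8 = A" "fst s 9 = Bb"
    "0 \<le> N" "N \<le> Cb" "0 < M" "M \<le> Cb" "0 \<le> A" "A < M" "0 \<le> Bb" "Bb < M" "Cb*Cb + Cb \<le> B" "1 \<le> B"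
  shows "\<exists>t s'. exec B fs_loop s t s' \<and> snd s' 1 = snd s 1 + of_int (fsum N M A Bb)
     \<and> (\<forall>x<6. fst s' x = fst s x) \<and> (\<forall>x. x \<noteq> 1 \<longrightarrow> snd s' x = snd s x)
     \<and> real t \<le> 2 + 30 * pot M A"
  using assms
proof (induction "nat A" arbitrary: s N M A Bb rule: less_induct)
  case less
  show ?case
  proof (cases "A = 0")
    case True
    have "exec B fs_loop s (Suc (Suc 0)) s"
      unfolding fs_loop_def using ExWhileF[of B s "BLe (IConst 1) (IVar 8)" fs_body] less True by simp
    moreover have "fsum N M A Bb = 0" using True less by (simp add: fsum_zero)
    ultimately show ?thesis using True by (intro exI[of _ "Suc (Suc 0)"] exI[of _ s]) (simp add: pot_def)
  next
    case False
    then have Apos: "A > 0" using less by simp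
    define Y where "Y = A*N + Bb"
    define N' where "N' = Y div M"
    define B' where "B' = Y mod M"
    have AN: "0 \<le> A*N" "A*N \<le> Cb*Cb" using less Apos by (simp_all add: mult_mono)
    have Y0: "0 \<le> Y" "Y \<le> Cb*Cb + Cb" using AN less by (simp_all add: Y_def)
    have YM: "Y < M*(N+1)"
    proof -
      have "A*N \<le> M*N" using less by (intro mult_right_mono) auto
      then show ?thesis using less by (simp add: Y_def algebra_simps)
    qed
    have N'N: "N' \<le> N" using div_le_of_lt[OF less(8) YM] by (simp add: N'_def)
    have N'0: "0 \<le> N'" using Y0 less by (simp add: N'_def pos_imp_zdiv_nonneg_iff)
    have B'r: "0 \<le> B'" "B' < M" using less by (simp_all add: B'_def)
    have MA: "0 \<le> M div A" "M div A \<le> M" using less Apos by (simp_all add: pos_imp_zdiv_nonneg_iff div_le_self_int)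
    have BA: "0 \<le> B' div A" "B' div A \<le> B'" using B'r Apos by (simp_all add: pos_imp_zdiv_nonneg_iff div_le_self_int)
    have C0: "0 \<le> Cb" using less by simp
    have CC: "Cb \<le> Cb*Cb + Cb" using C0 by simp
    have md: "0 \<le> B' mod A" "B' mod A < A" "0 \<le> M mod A" "M mod A < A" using Apos by simp_all
    have bnds: "N' \<le> B" "B' \<le> B" "N' - 1 \<le> B" "1 - N' \<le> B" "M div A \<le> B" "B' div A \<le> B"
        "B' mod A \<le> B" "M mod A \<le> B" "1 \<le> B"
      using md N'N N'0 B'r MA BA CC less by linarith+
    define s1 where "s1 = slrun fs_body s"
    have ok: "slok B fs_body s"
      unfolding fs_body_def accx_def using less Apos Y0 N'N N'0 B'r MA BA AN CC bnds md
      by (simp add: Y_def[symmetric] N'_def[symmetric] B'_def[symmetric] abs_le_iff)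
    have tb: "sltime fs_body s = 28" by (simp add: fs_body_def accx_def)
    have s1: "fst s1 6 = N'" "fst s1 7 = A" "fst s1 8 = M mod A" "fst s1 9 = B' mod A"
      "\<forall>x<6. fst s1 x = fst s x" "\<forall>x. x \<noteq> 1 \<longrightarrow> snd s1 x = snd s x"
      "snd s1 1 = snd s 1 + (complex_of_int N' * complex_of_int (N' - 1) * (1/2) * complex_of_int (M div A) + complex_of_int N' * complex_of_int (B' div A))"
      unfolding s1_def fs_body_def accx_def using less
      by (simp_all add: Y_def[symmetric] N'_def[symmetric] B'_def[symmetric])
    have lt: "nat (M mod A) < nat A" using Apos by simp
    have "\<exists>t s'. exec B fs_loop s1 t s' \<and> snd s' 1 = snd s1 1 + of_int (fsum N' A (M mod A) (B' mod A))
      \<and> (\<forall>x<6. fst s' x = fst s1 x) \<and> (\<forall>x. x \<noteq> 1 \<longrightarrow> snd s' x = snd s1 x)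
      \<and> real t \<le> 2 + 30 * pot A (M mod A)"
      by (rule less(1)[where s=s1 and N=N' and M=A and A="M mod A" and Bb="B' mod A"])
         (use lt s1 N'N N'0 less Apos md in auto)
    then obtain t' s' where IH: "exec B fs_loop s1 t' s'" "snd s' 1 = snd s1 1 + of_int (fsum N' A (M mod A) (B' mod A))"
      "\<forall>x<6. fst s' x = fst s1 x" "\<forall>x. x \<noteq> 1 \<longrightarrow> snd s' x = snd s1 x"
      "real t' \<le> 2 + 30 * pot A (M mod A)" by blast
    have ex: "exec B fs_loop s (1 + bsize (BLe (IConst 1) (IVar 8)) + 28 + t') s'"
      unfolding fs_loop_def
      by (rule ExWhileT) (use less Apos sl_exec[OF ok] tb IH(1) in \<open>simp_all add: s1_def fs_loop_def\<close>)
    have val: "fsum N M A Bb = (M div A)*(N'*(N'-1) div 2) + (B' div A)*N' + fsum N' A (M mod A) (B' mod A)"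
    proof -
      have "fsum N M A Bb = fsum N' A M B'"
        unfolding N'_def B'_def Y_def by (rule fsum_swap) (use less Apos in auto)
      also have "\<dots> = (M div A)*(N'*(N'-1) div 2) + (B' div A)*N' + fsum N' A (M mod A) (B' mod A)"
        by (rule fsum_norm) (use Apos N'0 in auto)
      finally show ?thesis .
    qed
    have v2: "snd s' 1 = snd s 1 + of_int (fsum N M A Bb)"
      unfolding IH(2) s1(7) val of_int_add of_int_mult half_prod by (simp add: field_simps)
    have tm: "real (1 + bsize (BLe (IConst 1) (IVar 8)) + 28 + t') \<le> 2 + 30 * pot M A"
    proof -
      have "30 + 30 * pot A (M mod A) \<le> 30 * pot M A"
      proof (cases "M mod A = 0")
        case True
        have "0 \<le> log 2 (real_of_int M)" "0 \<le> log 2 (real_of_int A)" using Apos less by auto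
        then show ?thesis using True Apos by (simp add: pot_def)
      next
        case False
        then have "0 < M mod A" using md by linarith
        then have "1 + log 2 (real_of_int (M mod A)) \<le> log 2 (real_of_int M)"
          using log_step Apos less by blast
        then show ?thesis using False Apos by (simp add: pot_def)
      qed
      then show ?thesis using IH(5) by simp
    qed
    show ?thesis
      using ex v2 IH(3,4) s1(5,6) tm by (intro exI[of _ "1 + bsize (BLe (IConst 1) (IVar 8)) + 28 + t'"] exI[of _ s']) auto
  qed
qed


lemma in_cyc_add: "in_cyclotomic M x \<Longrightarrow> in_cyclotomic M y \<Longrightarrow> in_cyclotomic M (x + y)"
proof -
  assume "in_cyclotomic M x" "in_cyclotomic M y"
  then obtain r s where r: "x = (\<Sum>k<M. of_rat (r k) * cis (2 * pi * real k / real M))"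
    and s: "y = (\<Sum>k<M. of_rat (s k) * cis (2 * pi * real k / real M))"
    unfolding in_cyclotomic_def by blast
  have "x + y = (\<Sum>k<M. of_rat ((\<lambda>k. r k + s k) k) * cis (2 * pi * real k / real M))"
    unfolding r s by (simp add: of_rat_add distrib_right sum.distrib)
  then show ?thesis unfolding in_cyclotomic_def by (intro exI[where x="\<lambda>k. r k + s k"]) simp
qed

lemma in_cyc_zero: "in_cyclotomic M 0"
  unfolding in_cyclotomic_def by (rule exI[of _ "\<lambda>_. 0"]) simp

lemma in_cyc_sum: "(\<And>x. x \<in> A \<Longrightarrow> in_cyclotomic M (g x)) \<Longrightarrow> in_cyclotomic M (\<Sum>x\<in>A. g x)"
proof (induction A rule: infinite_finite_induct)
  case (infinite A) then show ?case by (simp add: in_cyc_zero)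
next
  case empty then show ?case by (simp add: in_cyc_zero)
next
  case (insert x F) then show ?case by (simp add: in_cyc_add)
qed

lemma in_cyc_mono:
  assumes "M > 0" "w ^ M = 1"
  shows "in_cyclotomic M (of_rat q * w)"
proof -
  have "w \<in> (\<lambda>k. cis (2 * pi * real k / real M)) ` {..<M}"
    using bij_betw_roots_unity[OF assms(1)] assms(2) by (simp add: bij_betw_def)
  then obtain j where j: "j < M" "w = cis (2 * pi * real j / real M)" by auto
  have "(\<Sum>k<M. of_rat (if k = j then q else 0) * cis (2 * pi * real k / real M)) = of_rat q * w"
  proof -
    have "(\<Sum>k<M. of_rat (if k = j then q else 0) * cis (2 * pi * real k / real M))
        = (\<Sum>k<M. if k = j then of_rat q * cis (2 * pi * real k / real M) else 0)"
      by (intro sum.cong refl) auto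
    also have "\<dots> = of_rat q * w" using j by simp
    finally show ?thesis .
  qed
  then show ?thesis unfolding in_cyclotomic_def by (intro exI[of _ "\<lambda>k. if k = j then q else 0"]) simp
qed

definition runit :: "nat \<Rightarrow> complex \<Rightarrow> bool" where
  "runit M w \<longleftrightarrow> w = 0 \<or> w ^ M = 1"

lemma in_cyc_runit: "M > 0 \<Longrightarrow> runit M w \<Longrightarrow> in_cyclotomic M (of_rat q * w)"
  unfolding runit_def using in_cyc_mono[of M w q] in_cyc_zero by auto

lemma in_cyc_rat: "M > 0 \<Longrightarrow> in_cyclotomic M (of_rat q)"
  using in_cyc_mono[of M 1 q] by simp

lemma runit_mult: "runit M x \<Longrightarrow> runit M y \<Longrightarrow> runit M (x*y)"
  unfolding runit_def by (auto simp: power_mult_distrib)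

lemma runit_cnj: "runit M x \<Longrightarrow> runit M (cnj x)"
  unfolding runit_def by (metis complex_cnj_one complex_cnj_power complex_cnj_zero)

lemma runit_pow: "runit M x \<Longrightarrow> runit (M*N) x"
  unfolding runit_def by (auto simp: power_mult)

lemma char_pow:
  assumes "dirichlet_char q \<chi>"
  shows "\<chi> (x ^ n) = \<chi> x ^ n"
  by (induction n) (use assms in \<open>simp_all add: dirichlet_char_def\<close>)

lemma char_runit:
  assumes dc: "dirichlet_char q \<chi>"
  shows "runit (totient (nat q)) (\<chi> x)"
proof (cases "coprime x q")
  case False
  then show ?thesis using dc by (simp add: dirichlet_char_def runit_def)
next
  case True
  have q1: "q \<ge> 1" using dc by (simp add: dirichlet_char_def)
  define m where "m = nat (x mod q)"
  have xm: "int m = x mod q" using q1 by (simp add: m_def)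
  have "coprime (x mod q) q" using True q1 by simp
  then have "coprime (int m) (int (nat q))" using q1 xm by simp
  then have cop: "coprime m (nat q)" by (simp only: coprime_int_iff)
  have "[m ^ totient (nat q) = 1] (mod nat q)" by (rule euler_theorem[OF cop])
  then have "[int (m ^ totient (nat q)) = int 1] (mod int (nat q))" by (simp only: cong_int_iff)
  then have "[int m ^ totient (nat q) = 1] (mod q)" using q1 by simp
  then have "(int m ^ totient (nat q)) mod q = 1 mod q" by (simp add: cong_def)
  then have "\<chi> (int m ^ totient (nat q)) = \<chi> 1" by (rule char_cong[OF dc])
  then have "\<chi> (int m) ^ totient (nat q) = 1" using dc by (simp add: char_pow[OF dc] dirichlet_char_def)
  moreover have "\<chi> (int m) = \<chi> x" using xm char_mod[OF dc] by simp
  ultimately show ?thesis by (simp add: runit_def)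
qed


definition blk_pre :: "int \<Rightarrow> int \<Rightarrow> int \<Rightarrow> com" where
  "blk_pre q2 k \<rho> = Seq (IAssign 6 (IVar 5)) (Seq (IAssign 7 (IVar 2))
     (Seq (IAssign 8 (IMul (IVar 4) (IConst q2)))
     (Seq (IAssign 9 (IMul (IVar 4) (IAdd (IMul (IConst (q2*k)) (IVar 5)) (IConst \<rho>))))
     (Seq (CAssign 1 (accx 6 8 7 9))
     (Seq (IAssign 8 (IMod (IVar 8) (IVar 7)))
          (IAssign 9 (IMod (IVar 9) (IVar 7))))))))"

definition wexp :: "int \<Rightarrow> int \<Rightarrow> int \<Rightarrow> int \<Rightarrow> cexp" where
  "wexp q1 q2 k \<rho> = CSub (CSub (CMul (COfInt (IVar 4))
      (CAdd (CAdd (CMul (COfInt (IVar 5)) (CConst (of_int k / of_int q1))) (CConst (of_int \<rho> / of_int (q1*q2))))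
            (CMul (COfInt (ISub (IVar 5) (IConst 1))) (CConst (1 / (2 * of_int q1))))))
      (CMul (COfInt (IVar 5)) (CConst (1/2)))) (CVar 1)"

definition blk_post :: "(int \<Rightarrow> complex) \<Rightarrow> (int \<Rightarrow> complex) \<Rightarrow> int \<Rightarrow> int \<Rightarrow> int \<Rightarrow> int \<Rightarrow> com" where
  "blk_post \<chi>1 \<chi>2 q1 q2 k \<rho> = CAssign 0 (CAdd (CVar 0) (CMul (CConst (Gc \<chi>1 q1 k * cnj (\<chi>2 \<rho>))) (wexp q1 q2 k \<rho>)))"

definition blk :: "(int \<Rightarrow> complex) \<Rightarrow> (int \<Rightarrow> complex) \<Rightarrow> int \<Rightarrow> int \<Rightarrow> int \<Rightarrow> int \<Rightarrow> com" where
  "blk \<chi>1 \<chi>2 q1 q2 k \<rho> = Seq (blk_pre q2 k \<rho>) (Seq fs_loop (blk_post \<chi>1 \<chi>2 q1 q2 k \<rho>))"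

lemma pot_bound:
  assumes "0 \<le> A" "A < c" "1 \<le> c"
  shows "pot c A \<le> 1 + 2 * log 2 (real_of_int c)"
proof (cases "A = 0")
  case True
  then show ?thesis using assms by (simp add: pot_def)
next
  case False
  then have "log 2 (real_of_int A) \<le> log 2 (real_of_int c)" using assms by simp
  then show ?thesis using False by (simp add: pot_def)
qed

lemma blk_lemma:
  fixes B :: int
  assumes r: "fst s 2 = c" "fst s 4 = d'" "fst s 5 = e"
    and c1: "1 \<le> c" and d: "0 \<le> d'" "d' < c" and e: "1 \<le> e" "e \<le> c" and ce: "c = q1*q2*e"
    and q: "0 < q1" "0 < q2" and k: "0 \<le> k" "k < q1" and \<rho>: "0 \<le> \<rho>" "\<rho> < q2"
    and HB: "q1*q2*(c+1)^2 \<le> B"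
  shows "\<exists>t s'. exec B (blk \<chi>1 \<chi>2 q1 q2 k \<rho>) s t s' \<and>
     snd s' 0 = snd s 0 + Gc \<chi>1 q1 k * cnj (\<chi>2 \<rho>) * complex_of_real (brk q1 q2 c d' k \<rho>) \<and>
     (\<forall>x<6. fst s' x = fst s x) \<and> real t \<le> 74 + 60 * log 2 (real_of_int c)"
proof -
  define V where "V = q1*q2"
  define P where "P = q2*k*e + \<rho>"
  have "0 < V" using q by (simp add: V_def)
  then have V1: "1 \<le> V" by simp
  have bq: "q2 \<le> V" "\<rho> \<le> V"
  proof -
    have "1*q2 \<le> q1*q2" using q by (intro mult_right_mono) auto
    then show "q2 \<le> V" by (simp add: V_def)
    then show "\<rho> \<le> V" using \<rho> by simp
  qed
  have h1: "0 \<le> q2*k" "q2*k \<le> V"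
  proof -
    show "0 \<le> q2*k" using q k by simp
    have "q2*k \<le> q2*q1" using q k by (intro mult_left_mono) auto
    then show "q2*k \<le> V" by (simp add: V_def mult.commute)
  qed
  have h2: "0 \<le> q2*k*e" "q2*k*e \<le> V*c" using h1 e by (simp_all add: mult_mono)
  have h3: "0 \<le> P" "P \<le> V*(c+1)"
  proof -
    show "0 \<le> P" using h2 \<rho> by (simp add: P_def)
    show "P \<le> V*(c+1)" using h2 bq by (simp add: P_def algebra_simps)
  qed
  have cc: "c \<le> V*(c+1)^2" "V*c \<le> V*(c+1)^2" "V*(c+1) \<le> V*(c+1)^2" "c*(V*(c+1)) \<le> V*(c+1)^2" "c*c + c \<le> V*(c+1)^2"
  proof -
    have p: "(c+1)^2 = (c+1)*(c+1)" by (simp add: power2_eq_square)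
    have a1: "c+1 \<le> (c+1)*(c+1)" using c1 by simp
    show "V*(c+1) \<le> V*(c+1)^2" using a1 V1 p by (simp add: mult_left_mono)
    moreover show "V*c \<le> V*(c+1)^2" using calculation V1 by (smt (verit) mult_left_mono)
    moreover show "c \<le> V*(c+1)^2"
    proof -
      have "1*c \<le> V*c" using V1 c1 by (intro mult_right_mono) auto
      then show ?thesis using calculation by simp
    qed
    moreover show "c*(V*(c+1)) \<le> V*(c+1)^2" using p V1 c1 by (simp add: algebra_simps mult_left_mono)
    moreover show "c*c + c \<le> V*(c+1)^2"
    proof -
      have "c*c + c \<le> 1*((c+1)*(c+1))" using c1 by (simp add: algebra_simps)
      also have "\<dots> \<le> V*((c+1)*(c+1))" using V1 c1 by (intro mult_right_mono) auto
      finally show ?thesis using p by simp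
    qed
  qed
  have h4: "0 \<le> d'*P" "d'*P \<le> V*(c+1)^2"
  proof -
    show "0 \<le> d'*P" using d h3 by simp
    have "d'*P \<le> c*(V*(c+1))" using d h3 by (intro mult_mono) auto
    then show "d'*P \<le> V*(c+1)^2" using cc by simp
  qed
  have h5: "0 \<le> d'*q2" "d'*q2 \<le> V*(c+1)^2"
  proof -
    show "0 \<le> d'*q2" using d q by simp
    have "d'*q2 \<le> c*V" using d q V1 by (intro mult_mono) (auto simp: V_def)
    then show "d'*q2 \<le> V*(c+1)^2" using cc by (simp add: mult.commute)
  qed
  have cpos: "0 < c" using c1 by simp
  have dv: "0 \<le> (d'*q2) div c" "(d'*q2) div c \<le> d'*q2" "0 \<le> (d'*P) div c" "(d'*P) div c \<le> d'*P"
    using h4 h5 cpos by (simp_all add: pos_imp_zdiv_nonneg_iff div_le_self_int)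
  have md: "0 \<le> (d'*q2) mod c" "(d'*q2) mod c < c" "0 \<le> (d'*P) mod c" "(d'*P) mod c < c"
    using cpos by simp_all
  have VB: "V*(c+1)^2 \<le> B" using HB by (simp add: V_def)
  have Pe: "q2*k*e + \<rho> = P" by (simp add: P_def)
  define s1 where "s1 = slrun (blk_pre q2 k \<rho>) s"
  have Vc: "V*1 \<le> V*c" using V1 c1 by (intro mult_left_mono) auto
  have bb0: "q2 \<le> B" using h1 h2 h3 h4 h5 dv md cc VB bq e V1 c1 Vc by linarith
  have bb1: "q2*k \<le> B" using h1 h2 h3 h4 h5 dv md cc VB bq e V1 c1 Vc by linarith
  have bb2: "q2*k*e \<le> B" using h1 h2 h3 h4 h5 dv md cc VB bq e V1 c1 Vc by linarith
  have bb3: "\<rho> \<le> B" using h1 h2 h3 h4 h5 dv md cc VB bq e V1 c1 Vc by linarith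
  have bb4: "P \<le> B" using h1 h2 h3 h4 h5 dv md cc VB bq e V1 c1 Vc by linarith
  have bb5: "(d'*q2) mod c \<le> B" using h1 h2 h3 h4 h5 dv md cc VB bq e V1 c1 Vc by linarith
  have bb6: "(d'*P) mod c \<le> B" using h1 h2 h3 h4 h5 dv md cc VB bq e V1 c1 Vc by linarith
  have bb7: "d'*q2 \<le> B" using h1 h2 h3 h4 h5 dv md cc VB bq e V1 c1 Vc by linarith
  have bb8: "d'*P \<le> B" using h1 h2 h3 h4 h5 dv md cc VB bq e V1 c1 Vc by linarith
  have bb9: "(d'*q2) div c \<le> B" using h1 h2 h3 h4 h5 dv md cc VB bq e V1 c1 Vc by linarith
  have bb10: "(d'*P) div c \<le> B" using h1 h2 h3 h4 h5 dv md cc VB bq e V1 c1 Vc by linarith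
  have bb11: "1 \<le> B" using h1 h2 h3 h4 h5 dv md cc VB bq e V1 c1 Vc by linarith
  have bb12: "e - 1 \<le> B" using h1 h2 h3 h4 h5 dv md cc VB bq e V1 c1 Vc by linarith
  have bb13: "c \<le> B" using h1 h2 h3 h4 h5 dv md cc VB bq e V1 c1 Vc by linarith
  note bb = bb0 bb1 bb2 bb3 bb4 bb5 bb6 bb7 bb8 bb9 bb10 bb11 bb12 bb13
  have ok1: "slok B (blk_pre q2 k \<rho>) s"
    unfolding blk_pre_def accx_def using r h1 h2 h3 h4 h5 dv md bb q \<rho> e
    by (simp add: Pe abs_le_iff mult.assoc[symmetric])
  have t1: "sltime (blk_pre q2 k \<rho>) s = 26" by (simp add: blk_pre_def accx_def)
  have s1: "fst s1 6 = e" "fst s1 7 = c" "fst s1 8 = (d'*q2) mod c" "fst s1 9 = (d'*P) mod c"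
      "\<forall>x<6. fst s1 x = fst s x" "snd s1 0 = snd s 0"
      "snd s1 1 = complex_of_int e * complex_of_int (e-1) * (1/2) * complex_of_int ((d'*q2) div c) + complex_of_int e * complex_of_int ((d'*P) div c)"
    unfolding s1_def blk_pre_def accx_def using r by (simp_all add: Pe mult.assoc[symmetric])
  obtain t2 s2 where L: "exec B fs_loop s1 t2 s2" "snd s2 1 = snd s1 1 + of_int (fsum e c ((d'*q2) mod c) ((d'*P) mod c))"
     "\<forall>x<6. fst s2 x = fst s1 x" "\<forall>x. x \<noteq> 1 \<longrightarrow> snd s2 x = snd s1 x" "real t2 \<le> 2 + 30 * pot c ((d'*q2) mod c)"
    using fs_loop_lemma[OF s1(1-4), of c B] e md c1 cc VB by auto
  have fsv: "snd s2 1 = of_int (fsum e c (d'*q2) (d'*P))"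
  proof -
    have eq: "fsum e c (d'*q2) (d'*P) = ((d'*q2) div c)*(e*(e-1) div 2) + ((d'*P) div c)*e + fsum e c ((d'*q2) mod c) ((d'*P) mod c)"
      by (rule fsum_norm) (use cpos e in auto)
    show ?thesis unfolding L(2) s1(7) eq of_int_add of_int_mult half_prod by (simp add: field_simps)
  qed
  define s3 where "s3 = slrun (blk_post \<chi>1 \<chi>2 q1 q2 k \<rho>) s2"
  have r2: "fst s2 4 = d'" "fst s2 5 = e" using L(3) s1(5) r by auto
  have ok3: "slok B (blk_post \<chi>1 \<chi>2 q1 q2 k \<rho>) s2"
    unfolding blk_post_def wexp_def using r2 e bb by (simp add: abs_le_iff)
  have t3: "sltime (blk_post \<chi>1 \<chi>2 q1 q2 k \<rho>) s2 = 16" by (simp add: blk_post_def wexp_def)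
  have ediv: "c div (q1*q2) = e" using ce q by simp
  have brk_eq: "complex_of_real (brk q1 q2 c d' k \<rho>) = cval s2 (wexp q1 q2 k \<rho>)"
  proof -
    have "d'*(q2*e*k+\<rho>) = d'*P" by (simp add: P_def mult_ac)
    then show ?thesis unfolding brk_def wexp_def ediv using r2 fsv q
      by (simp add: field_simps)
  qed
  have s3: "snd s3 0 = snd s 0 + Gc \<chi>1 q1 k * cnj (\<chi>2 \<rho>) * complex_of_real (brk q1 q2 c d' k \<rho>)"
      "\<forall>x<6. fst s3 x = fst s x"
    unfolding s3_def blk_post_def using L(3,4) s1(5,6) brk_eq by (simp_all add: mult.assoc)
  have ex: "exec B (blk \<chi>1 \<chi>2 q1 q2 k \<rho>) s (26 + (t2 + 16)) s3"
    unfolding blk_def using ExSeq[OF sl_exec[OF ok1, folded s1_def] ExSeq[OF L(1) sl_exec[OF ok3, folded s3_def]]] t1 t3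
    by simp
  have tt: "real (26 + (t2 + 16)) \<le> 74 + 60 * log 2 (real_of_int c)"
    using L(5) pot_bound[OF md(1,2) c1] by simp
  show ?thesis using ex s3 tt by blast
qed


fun blocks :: "(int \<Rightarrow> complex) \<Rightarrow> (int \<Rightarrow> complex) \<Rightarrow> int \<Rightarrow> int \<Rightarrow> (int \<times> int) list \<Rightarrow> com" where
  "blocks \<chi>1 \<chi>2 q1 q2 [] = Skip"
| "blocks \<chi>1 \<chi>2 q1 q2 (p # xs) = Seq (blk \<chi>1 \<chi>2 q1 q2 (fst p) (snd p)) (blocks \<chi>1 \<chi>2 q1 q2 xs)"

fun chainc :: "(int \<Rightarrow> complex) \<Rightarrow> int \<Rightarrow> int list \<Rightarrow> com" where
  "chainc \<chi>2 q2 [] = Skip"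
| "chainc \<chi>2 q2 (\<alpha> # xs) = If (BEq (IMod (IVar 4) (IConst q2)) (IConst \<alpha>))
      (CAssign 0 (CMul (CVar 0) (CConst (cnj (\<chi>2 \<alpha>))))) (chainc \<chi>2 q2 xs)"

definition prog :: "(int \<Rightarrow> complex) \<Rightarrow> (int \<Rightarrow> complex) \<Rightarrow> int \<Rightarrow> int \<Rightarrow> com" where
  "prog \<chi>1 \<chi>2 q1 q2 = Seq (IAssign 4 (IMod (IVar 3) (IVar 2)))
     (Seq (IAssign 5 (IDiv (IVar 2) (IConst (q1*q2))))
     (Seq (CAssign 0 (CConst 0))
     (Seq (blocks \<chi>1 \<chi>2 q1 q2 (List.product [0..q1-1] [0..q2-1]))
          (chainc \<chi>2 q2 [0..q2-1]))))"

lemma blocks_lemma: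
  fixes B :: int
  assumes r: "fst s 2 = c" "fst s 4 = d'" "fst s 5 = e"
    and c1: "1 \<le> c" and d: "0 \<le> d'" "d' < c" and e: "1 \<le> e" "e \<le> c" and ce: "c = q1*q2*e"
    and q: "0 < q1" "0 < q2"
    and HB: "q1*q2*(c+1)^2 \<le> B"
    and xs: "\<forall>p\<in>set xs. 0 \<le> fst p \<and> fst p < q1 \<and> 0 \<le> snd p \<and> snd p < q2"
  shows "\<exists>t s'. exec B (blocks \<chi>1 \<chi>2 q1 q2 xs) s t s' \<and>
     snd s' 0 = snd s 0 + (\<Sum>p\<leftarrow>xs. Gc \<chi>1 q1 (fst p) * cnj (\<chi>2 (snd p)) * complex_of_real (brk q1 q2 c d' (fst p) (snd p))) \<and>
     (\<forall>x<6. fst s' x = fst s x) \<and> real t \<le> real (length xs) * (74 + 60 * log 2 (real_of_int c))"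
  using r xs
proof (induction xs arbitrary: s)
  case Nil
  then show ?case by (intro exI[of _ 0] exI[of _ s]) (simp add: ExSkip)
next
  case (Cons p xs)
  obtain t1 s1 where b1: "exec B (blk \<chi>1 \<chi>2 q1 q2 (fst p) (snd p)) s t1 s1"
     "snd s1 0 = snd s 0 + Gc \<chi>1 q1 (fst p) * cnj (\<chi>2 (snd p)) * complex_of_real (brk q1 q2 c d' (fst p) (snd p))"
     "\<forall>x<6. fst s1 x = fst s x" "real t1 \<le> 74 + 60 * log 2 (real_of_int c)"
    using blk_lemma[of s c d' e q1 q2 "fst p" "snd p" B \<chi>1 \<chi>2] Cons.prems c1 d e ce q HB by auto
  have r1: "fst s1 2 = c" "fst s1 4 = d'" "fst s1 5 = e" using b1(3) Cons.prems by auto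
  obtain t2 s2 where b2: "exec B (blocks \<chi>1 \<chi>2 q1 q2 xs) s1 t2 s2"
     "snd s2 0 = snd s1 0 + (\<Sum>p\<leftarrow>xs. Gc \<chi>1 q1 (fst p) * cnj (\<chi>2 (snd p)) * complex_of_real (brk q1 q2 c d' (fst p) (snd p)))"
     "\<forall>x<6. fst s2 x = fst s1 x" "real t2 \<le> real (length xs) * (74 + 60 * log 2 (real_of_int c))"
    using Cons.IH[OF r1] Cons.prems by auto
  have ex: "exec B (blocks \<chi>1 \<chi>2 q1 q2 (p # xs)) s (t1 + t2) s2"
    using ExSeq[OF b1(1) b2(1)] by simp
  show ?case
    using ex b1 b2 by (intro exI[of _ "t1 + t2"] exI[of _ s2]) (auto simp: algebra_simps)
qed

lemma chain_lemma:
  assumes "fst s 4 = d'" "0 < q2" "q2 \<le> B" "d' mod q2 \<in> set xs" "\<forall>\<alpha>\<in>set xs. 0 \<le> \<alpha> \<and> \<alpha> < q2"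
  shows "slok B (chainc \<chi>2 q2 xs) s \<and> snd (slrun (chainc \<chi>2 q2 xs) s) 0 = snd s 0 * cnj (\<chi>2 (d' mod q2))
     \<and> sltime (chainc \<chi>2 q2 xs) s \<le> 5 * length xs"
  using assms(4,5)
proof (induction xs)
  case Nil then show ?case by simp
next
  case (Cons \<alpha> xs)
  have b: "0 \<le> d' mod q2" "d' mod q2 < q2" using assms(2) by simp_all
  have b2: "- q2 \<le> B" "d' mod q2 \<le> B" "- (d' mod q2) \<le> B" using b assms(2,3) by linarith+
  show ?case
  proof (cases "\<alpha> = d' mod q2")
    case True
    then show ?thesis using assms b b2 by (simp add: abs_le_iff)
  next
    case False
    then have "d' mod q2 \<in> set xs" using Cons.prems by simp
    then have IH: "slok B (chainc \<chi>2 q2 xs) s \<and> snd (slrun (chainc \<chi>2 q2 xs) s) 0 = snd s 0 * cnj (\<chi>2 (d' mod q2))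
     \<and> sltime (chainc \<chi>2 q2 xs) s \<le> 5 * length xs" using Cons by simp
    have "\<alpha> < q2" "0 \<le> \<alpha>" using Cons.prems by auto
    have "- \<alpha> \<le> B" "\<alpha> \<le> B" using \<open>\<alpha> < q2\<close> \<open>0 \<le> \<alpha>\<close> assms(2,3) by linarith+
    then show ?thesis using IH False assms b b2 by (simp add: abs_le_iff)
  qed
qed

lemma cconsts_blocks: "z \<in> cconsts (blocks \<chi>1 \<chi>2 q1 q2 xs) \<Longrightarrow> \<exists>p\<in>set xs. z \<in> cconsts (blk \<chi>1 \<chi>2 q1 q2 (fst p) (snd p))"
  by (induction xs) auto

lemma cconsts_blk: "z \<in> cconsts (blk \<chi>1 \<chi>2 q1 q2 k \<rho>) \<Longrightarrow> z = 1/2 \<or> z = Gc \<chi>1 q1 k * cnj (\<chi>2 \<rho>) \<or>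
   z = of_int k / of_int q1 \<or> z = of_int \<rho> / of_int (q1*q2) \<or> z = 1/(2 * of_int q1)"
  by (auto simp: blk_def blk_pre_def blk_post_def wexp_def accx_def fs_loop_def fs_body_def)

lemma cconsts_chain: "z \<in> cconsts (chainc \<chi>2 q2 xs) \<Longrightarrow> \<exists>\<alpha>\<in>set xs. z = cnj (\<chi>2 \<alpha>)"
  by (induction xs) auto

lemma Gc_cyc:
  assumes dc1: "dirichlet_char q1 \<chi>1" and dc2: "dirichlet_char q2 \<chi>2"
    and M: "M = totient (nat q1) * totient (nat q2)" "M > 0"
  shows "in_cyclotomic M (Gc \<chi>1 q1 k * cnj (\<chi>2 \<rho>))"
proof -
  define cr where "cr i = (rat_of_int i / rat_of_int q1 - 1/2 - (if q1 - k \<le> i then 1 else 0))" for i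
  have "Gc \<chi>1 q1 k * cnj (\<chi>2 \<rho>) = (\<Sum>i\<in>{1..q1}. of_rat (cr i) * (cnj (\<chi>1 i) * cnj (\<chi>2 \<rho>)))"
    unfolding Gc_def sum_distrib_right
  proof (rule sum.cong[OF refl])
    fix i
    have "complex_of_real (coefG q1 k i) = of_rat (cr i)"
      by (simp add: coefG_def cr_def of_rat_diff of_rat_divide)
    then show "cnj (\<chi>1 i) * complex_of_real (coefG q1 k i) * cnj (\<chi>2 \<rho>) = of_rat (cr i) * (cnj (\<chi>1 i) * cnj (\<chi>2 \<rho>))"
      by simp
  qed
  also have "in_cyclotomic M \<dots>"
  proof (rule in_cyc_sum)
    fix i
    have r1: "runit M (cnj (\<chi>1 i))" unfolding M(1) by (intro runit_cnj runit_pow char_runit[OF dc1])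
    have "runit (totient (nat q2) * totient (nat q1)) (cnj (\<chi>2 \<rho>))" by (intro runit_cnj runit_pow char_runit[OF dc2])
    then have r2: "runit M (cnj (\<chi>2 \<rho>))" unfolding M(1) by (simp add: mult.commute)
    show "in_cyclotomic M (of_rat (cr i) * (cnj (\<chi>1 i) * cnj (\<chi>2 \<rho>)))"
      by (rule in_cyc_runit[OF M(2) runit_mult[OF r1 r2]])
  qed
  finally show ?thesis .
qed

lemma ln2_ge: "ln (2::real) \<ge> 1/2"
proof -
  have "ln (1/2::real) \<le> 1/2 - 1" by (rule ln_le_minus_one) simp
  moreover have "ln (1/2::real) = - ln 2" by (simp add: ln_div)
  ultimately show ?thesis by simp
qed

lemma log2_le: "1 \<le> x \<Longrightarrow> log 2 x \<le> 2 * ln (x::real)"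
proof -
  assume x: "1 \<le> x"
  have l: "0 \<le> ln x" using x by simp
  have "log 2 x = ln x / ln 2" by (simp add: log_def)
  also have "\<dots> \<le> ln x / (1/2)" using l ln2_ge by (intro divide_left_mono) auto
  finally show ?thesis by simp
qed

theorem theorem1p4:
  fixes q1 q2 :: int and \<chi>1 \<chi>2 :: "int \<Rightarrow> complex"
  assumes "primitive_char q1 \<chi>1" and "primitive_char q2 \<chi>2"
    and "q1 > 1" and "q2 > 1"
    and "\<chi>1 (-1) * \<chi>2 (-1) = 1"
  shows "\<exists>(P :: com) (M :: nat) (K :: nat).
           M > 0 \<and> (\<forall>z \<in> cconsts P. in_cyclotomic M z) \<and>
           (\<forall>a b c d. in_Gamma0 (q1 * q2) a b c d \<and> c \<ge> 1 \<longrightarrow>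
              (\<exists>t s'. exec (int K * (\<bar>a\<bar> + \<bar>b\<bar> + \<bar>c\<bar> + \<bar>d\<bar> + 1) ^ K)
                         P (init_state a b c d) t s' \<and>
                       snd s' 0 = dedekind_sum \<chi>1 \<chi>2 q1 a c \<and>
                       real t \<le> real K * (1 + ln (real_of_int c))))"
proof -
  have dc1: "dirichlet_char q1 \<chi>1" and dc2: "dirichlet_char q2 \<chi>2"
    using assms(1,2) by (simp_all add: primitive_char_def)
  have q1: "q1 > 1" and q2: "q2 > 1" using assms(3,4) .
  have sz: "(\<Sum>i\<in>{1..q1}. cnj (\<chi>1 i)) = 0"
  proof -
    have "(\<Sum>i\<in>{1..q1}. \<chi>1 i) = 0" by (rule char_sum_zero[OF assms(1) q1])
    then have "cnj (\<Sum>i\<in>{1..q1}. \<chi>1 i) = 0" by simp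
    then show ?thesis by (simp add: cnj_sum)
  qed
  define V where "V = q1*q2"
  have V4: "V \<ge> 4"
  proof -
    have "2*2 \<le> q1*q2" using q1 q2 by (intro mult_mono) auto
    then show ?thesis by (simp add: V_def)
  qed
  define M where "M = totient (nat q1) * totient (nat q2)"
  define K where "K = nat (200*V)"
  define P where "P = prog \<chi>1 \<chi>2 q1 q2"
  have Mpos: "M > 0" using q1 q2 by (simp add: M_def)
  have cyc: "\<forall>z \<in> cconsts P. in_cyclotomic M z"
  proof
    fix z assume z: "z \<in> cconsts P"
    have rat: "in_cyclotomic M (of_rat r)" for r by (rule in_cyc_rat[OF Mpos])
    have z': "z = 0 \<or> z \<in> cconsts (blocks \<chi>1 \<chi>2 q1 q2 (List.product [0..q1-1] [0..q2-1])) \<or> z \<in> cconsts (chainc \<chi>2 q2 [0..q2-1])"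
      using z by (simp add: P_def prog_def)
    show "in_cyclotomic M z"
    proof -
      { assume "z = 0" then have ?thesis using rat[of 0] by simp }
      moreover
      { assume "z \<in> cconsts (blocks \<chi>1 \<chi>2 q1 q2 (List.product [0..q1-1] [0..q2-1]))"
        then obtain p where "z \<in> cconsts (blk \<chi>1 \<chi>2 q1 q2 (fst p) (snd p))" using cconsts_blocks by blast
        then have "z = 1/2 \<or> z = Gc \<chi>1 q1 (fst p) * cnj (\<chi>2 (snd p)) \<or>
           z = of_int (fst p) / of_int q1 \<or> z = of_int (snd p) / of_int (q1*q2) \<or> z = 1/(2 * of_int q1)"
          by (rule cconsts_blk)
        moreover have "in_cyclotomic M (1/2)" using rat[of "1/2"] by (simp add: of_rat_divide)
        moreover have "in_cyclotomic M (of_int (fst p) / of_int q1)" using rat[of "of_int (fst p) / of_int q1"] by (simp add: of_rat_divide)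
        moreover have "in_cyclotomic M (of_int (snd p) / of_int (q1*q2))" using rat[of "of_int (snd p) / of_int (q1*q2)"] by (simp add: of_rat_divide of_rat_mult)
        moreover have "in_cyclotomic M (1/(2 * of_int q1))" using rat[of "1/(2 * of_int q1)"] by (simp add: of_rat_divide of_rat_mult)
        moreover have "in_cyclotomic M (Gc \<chi>1 q1 (fst p) * cnj (\<chi>2 (snd p)))"
          by (rule Gc_cyc[OF dc1 dc2 M_def Mpos])
        ultimately have ?thesis by blast }
      moreover
      { assume "z \<in> cconsts (chainc \<chi>2 q2 [0..q2-1])"
        then obtain \<alpha> where "z = cnj (\<chi>2 \<alpha>)" using cconsts_chain by blast
        moreover have "runit (totient (nat q2) * totient (nat q1)) (cnj (\<chi>2 \<alpha>))" by (intro runit_cnj runit_pow char_runit[OF dc2])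
        then have "runit M (cnj (\<chi>2 \<alpha>))" by (simp add: M_def mult.commute)
        ultimately have ?thesis using in_cyc_runit[OF Mpos, of _ 1] by fastforce }
      ultimately show ?thesis using z' by blast
    qed
  qed
  have main: "\<forall>a b c d. in_Gamma0 (q1 * q2) a b c d \<and> c \<ge> 1 \<longrightarrow>
              (\<exists>t s'. exec (int K * (\<bar>a\<bar> + \<bar>b\<bar> + \<bar>c\<bar> + \<bar>d\<bar> + 1) ^ K)
                         P (init_state a b c d) t s' \<and>
                       snd s' 0 = dedekind_sum \<chi>1 \<chi>2 q1 a c \<and>
                       real t \<le> real K * (1 + ln (real_of_int c)))"
  proof (intro allI impI)
    fix a b c d :: int
    assume g: "in_Gamma0 (q1 * q2) a b c d \<and> c \<ge> 1"
    have det: "a*d - b*c = 1" and dv: "q1*q2 dvd c" and c1: "c \<ge> 1" using g by (auto simp: in_Gamma0_def)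
    define X where "X = \<bar>a\<bar> + \<bar>b\<bar> + \<bar>c\<bar> + \<bar>d\<bar> + 1"
    define B where "B = int K * X ^ K"
    define e where "e = c div V"
    define d' where "d' = d mod c"
    have ce: "c = q1*q2*e" using dv by (simp add: e_def V_def)
    have cpos: "c > 0" using c1 by simp
    have epos: "e \<ge> 1"
    proof -
      have "0 < V" using V4 by simp
      moreover have "0 < V*e" using ce cpos by (simp add: V_def)
      ultimately have "0 < e" by (metis zero_less_mult_iff less_asym)
      then show ?thesis by simp
    qed
    have ec: "e \<le> c" using cpos V4 by (simp add: e_def div_le_self_int)
    have d'r: "0 \<le> d'" "d' < c" using cpos by (simp_all add: d'_def)
    have HB: "V*(c+1)^2 \<le> B"
    proof -
      have K2: "2 \<le> K" using V4 by (simp add: K_def)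
      have X1: "c+1 \<le> X" using c1 by (simp add: X_def)
      have "(c+1)^2 \<le> X^2" using X1 c1 by (intro power_mono) auto
      also have "X^2 \<le> X^K" using K2 X1 c1 by (intro power_increasing) auto
      finally have p: "(c+1)^2 \<le> X^K" .
      have "V \<le> int K" using V4 by (simp add: K_def)
      then have "V*(c+1)^2 \<le> int K * X^K" using p V4 by (intro mult_mono) auto
      then show ?thesis by (simp add: B_def)
    qed
    have c_le: "(c+1) \<le> (c+1)^2" using c1 by (simp add: power2_eq_square)
    have VV: "V*1 \<le> V*(c+1)^2" using V4 c1 c_le by (intro mult_left_mono) auto
    have Vc: "1*(c+1)^2 \<le> V*(c+1)^2" using V4 by (intro mult_right_mono) auto
    have Bb: "c \<le> B" "V \<le> B" "q2 \<le> B" "1 \<le> B"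
    proof -
      show "c \<le> B" using HB c_le Vc by linarith
      show "V \<le> B" using HB VV by linarith
      have "1*q2 \<le> q1*q2" using q1 q2 by (intro mult_right_mono) auto
      then show "q2 \<le> B" using HB VV by (simp add: V_def)
      show "1 \<le> B" using HB VV V4 by linarith
    qed
    define c1' where "c1' = IAssign 4 (IMod (IVar 3) (IVar 2))"
    define c2' where "c2' = IAssign 5 (IDiv (IVar 2) (IConst (q1*q2)))"
    define c3' where "c3' = CAssign 0 (CConst 0)"
    define s0 where "s0 = init_state a b c d"
    define s1 where "s1 = slrun c1' s0"
    define s2 where "s2 = slrun c2' s1"
    define s3 where "s3 = slrun c3' s2"
    have ediv: "c div (q1*q2) = e" by (simp add: e_def V_def)
    have cdiv: "0 \<le> c div (q1*q2)" "c div (q1*q2) \<le> c" using epos ec ediv by simp_all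
    have x1: "exec B c1' s0 2 s1"
      using sl_exec[of B c1' s0] d'r Bb by (simp add: c1'_def s0_def s1_def init_state_def d'_def abs_le_iff numeral_2_eq_2)
    have x2: "exec B c2' s1 2 s2"
      using sl_exec[of B c2' s1] Bb cdiv V4 by (simp add: c2'_def s0_def s1_def s2_def c1'_def init_state_def abs_le_iff V_def numeral_2_eq_2)
    have x3: "exec B c3' s2 1 s3"
      using sl_exec[of B c3' s2] by (simp add: c3'_def s3_def)
    have r3: "fst s3 2 = c" "fst s3 4 = d'" "fst s3 5 = e" "snd s3 0 = 0"
      by (simp_all add: s3_def s2_def s1_def s0_def c1'_def c2'_def c3'_def init_state_def d'_def ediv)
    define xs where "xs = List.product [0..q1-1] [0..q2-1]"
    define val where "val p = Gc \<chi>1 q1 (fst p) * cnj (\<chi>2 (snd p)) * complex_of_real (brk q1 q2 c d' (fst p) (snd p))" for p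
    have xsr: "\<forall>p\<in>set xs. 0 \<le> fst p \<and> fst p < q1 \<and> 0 \<le> snd p \<and> snd p < q2"
      by (auto simp: xs_def)
    obtain t4 s4 where b4: "exec B (blocks \<chi>1 \<chi>2 q1 q2 xs) s3 t4 s4"
       "snd s4 0 = snd s3 0 + (\<Sum>p\<leftarrow>xs. val p)"
       "\<forall>x<6. fst s4 x = fst s3 x" "real t4 \<le> real (length xs) * (74 + 60 * log 2 (real_of_int c))"
      using blocks_lemma[OF r3(1-3) c1 d'r epos ec ce _ _ _ xsr, of B \<chi>1 \<chi>2] q1 q2 HB
      unfolding val_def V_def by auto
    have r4: "fst s4 4 = d'" using b4(3) r3 by simp
    have inl: "d' mod q2 \<in> set [0..q2-1]" using q2 by simp
    have ch: "slok B (chainc \<chi>2 q2 [0..q2-1]) s4 \<and> snd (slrun (chainc \<chi>2 q2 [0..q2-1]) s4) 0 = snd s4 0 * cnj (\<chi>2 (d' mod q2))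
     \<and> sltime (chainc \<chi>2 q2 [0..q2-1]) s4 \<le> 5 * length [0..q2-1]"
      by (rule chain_lemma[OF r4 _ Bb(3) inl]) (use q2 in auto)
    define s5 where "s5 = slrun (chainc \<chi>2 q2 [0..q2-1]) s4"
    define t5 where "t5 = sltime (chainc \<chi>2 q2 [0..q2-1]) s4"
    have x5: "exec B (chainc \<chi>2 q2 [0..q2-1]) s4 t5 s5"
      unfolding s5_def t5_def using ch sl_exec by blast
    have ex: "exec B P s0 (2 + (2 + (1 + (t4 + t5)))) s5"
      unfolding P_def prog_def
      using ExSeq[OF x1[unfolded c1'_def] ExSeq[OF x2[unfolded c2'_def] ExSeq[OF x3[unfolded c3'_def] ExSeq[OF b4(1)[unfolded xs_def] x5]]]] .
    have valeq: "snd s5 0 = dedekind_sum \<chi>1 \<chi>2 q1 a c"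
    proof -
      have "snd s5 0 = (\<Sum>p\<leftarrow>xs. val p) * cnj (\<chi>2 (d' mod q2))"
        using ch b4(2) r3(4) by (simp add: s5_def)
      also have "(\<Sum>p\<leftarrow>xs. val p) = (\<Sum>k\<in>{0..<q1}. \<Sum>\<rho>\<in>{0..<q2}. val (k, \<rho>))"
      proof -
        have "distinct xs" by (simp add: xs_def distinct_product)
        then have "(\<Sum>p\<leftarrow>xs. val p) = sum val (set xs)" by (rule sum_list_distinct_conv_sum_set)
        also have "set xs = {0..<q1} \<times> {0..<q2}" by (auto simp: xs_def)
        also have "sum val ({0..<q1} \<times> {0..<q2}) = (\<Sum>k\<in>{0..<q1}. \<Sum>\<rho>\<in>{0..<q2}. val (k, \<rho>))"
          by (simp add: sum.cartesian_product)
        finally show ?thesis .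
      qed
      also have "\<chi>2 (d' mod q2) = \<chi>2 (d mod c)" using char_mod[OF dc2, of d'] by (simp add: d'_def)
      also have "(\<Sum>k\<in>{0..<q1}. \<Sum>\<rho>\<in>{0..<q2}. val (k, \<rho>)) * cnj (\<chi>2 (d mod c)) = dedekind_sum \<chi>1 \<chi>2 q1 a c"
        using ded_formula[OF dc1 dc2 q1 q2 sz det dv c1] by (simp add: val_def d'_def mult.commute)
      finally show ?thesis .
    qed
    have time: "real (2 + (2 + (1 + (t4 + t5)))) \<le> real K * (1 + ln (real_of_int c))"
    proof -
      have lx: "real (length xs) = real_of_int V" using q1 q2 by (simp add: xs_def V_def nat_mult_distrib)
      have "t5 \<le> 5 * nat q2" using ch by (simp add: t5_def)
      then have "real t5 \<le> real (5 * nat q2)" by (rule of_nat_mono)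
      then have t5b: "real t5 \<le> 5 * real_of_int q2" using q2 by simp
      have lc: "log 2 (real_of_int c) \<le> 2 * ln (real_of_int c)" using c1 by (intro log2_le) simp
      have L0: "0 \<le> ln (real_of_int c)" using c1 by simp
      have V0: "0 \<le> real_of_int V" using V4 by simp
      have "real t4 \<le> real_of_int V * (74 + 60 * log 2 (real_of_int c))" using b4(4) lx by simp
      also have "\<dots> \<le> real_of_int V * (74 + 120 * ln (real_of_int c))"
        using lc V0 by (intro mult_left_mono) auto
      finally have t4b: "real t4 \<le> 74 * real_of_int V + 120 * (real_of_int V * ln (real_of_int c))"
        by (simp add: algebra_simps)
      have VL: "0 \<le> real_of_int V * ln (real_of_int c)" using V0 L0 by simp
      have q2V: "real_of_int q2 \<le> real_of_int V"
      proof -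
        have "1*q2 \<le> q1*q2" using q1 q2 by (intro mult_right_mono) auto
        then have "real_of_int q2 \<le> real_of_int (q1*q2)" by linarith
        then show ?thesis by (simp add: V_def)
      qed
      have KV: "real K = 200 * real_of_int V" using V4 by (simp add: K_def)
      show ?thesis using t4b t5b VL q2V V4 KV by (simp add: algebra_simps)
    qed
    show "\<exists>t s'. exec (int K * (\<bar>a\<bar> + \<bar>b\<bar> + \<bar>c\<bar> + \<bar>d\<bar> + 1) ^ K) P (init_state a b c d) t s' \<and>
          snd s' 0 = dedekind_sum \<chi>1 \<chi>2 q1 a c \<and> real t \<le> real K * (1 + ln (real_of_int c))"
      using ex valeq time unfolding B_def X_def s0_def by blast
  qed
  show ?thesis using Mpos cyc main by blast
qed


end
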